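(* In the three-dimensional Poisson regression model with first-order interactions, $\mathbf{f}(\mathbf{x})^\top\boldsymbol{\beta}=\beta_0+\beta_1x_1+\beta_2x_2+\beta_3x_3+\beta_{12}x_1x_2+\beta_{13}x_1x_3+\beta_{23}x_2x_3$, let $\beta_0=0$, $\beta_1=\beta_2=\beta_3=-1$ and $\beta_{12}=\beta_{13}=\beta_{23}=0$. Then the design which assigns equal weights $1/7$ to the seven settings $(0,0,0)$, $(2,0,0)$, $(0,2,0)$, $(0,0,2)$, $(2,2,0)$, $(2,0,2)$, $(0,2,2)$ is locally $D$-optimal at $\boldsymbol{\beta}$ on $\mathcal{X}=[0,\infty)^3$.
   Context: An observation at $\mathbf{x}=(x_1,x_2,x_3)$ is Poisson distributed with mean $\lambda(\mathbf{x})=\exp(\mathbf{f}(\mathbf{x})^\top\boldsymbol{\beta})$ with $\mathbf{f}(\mathbf{x})=(1,x_1,x_2,x_3,x_1x_2,x_1x_3,x_2x_3)^\top$. A design $\xi$ is a finite collection of distinct settings $\mathbf{x}_i\in\mathcal{X}$ with weights $w_i\ge0$ summing to $1$; its information matrix is $\mathbf{M}_{\boldsymbol{\beta}}(\xi)=\sum_i w_i\lambda(\mathbf{x}_i)\mathbf{f}(\mathbf{x}_i)\mathbf{f}(\mathbf{x}_i)^\top$. A design is locally $D$-optimal at $\boldsymbol{\beta}$ on $\mathcal{X}$ if it maximizes $\det\mathbf{M}_{\boldsymbol{\beta}}(\xi)$ over all designs on $\mathcal{X}$. *)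

theory Defs
  imports "HOL-Analysis.Analysis"
begin

definition regf :: "real^3 \<Rightarrow> real^7" where
  "regf x = vector [1, x$1, x$2, x$3, x$1 * x$2, x$1 * x$3, x$2 * x$3]"

definition intensity :: "real^7 \<Rightarrow> real^3 \<Rightarrow> real" where
  "intensity \<beta> x = exp (regf x \<bullet> \<beta>)"

definition is_design :: "(real^3) set \<Rightarrow> (real^3) set \<Rightarrow> (real^3 \<Rightarrow> real) \<Rightarrow> bool" where
  "is_design X S w \<longleftrightarrow> finite S \<and> S \<subseteq> X \<and> (\<forall>x\<in>S. 0 \<le> w x) \<and> sum w S = 1"

definition info_matrix :: "real^7 \<Rightarrow> (real^3) set \<Rightarrow> (real^3 \<Rightarrow> real) \<Rightarrow> real^7^7" where
  "info_matrix \<beta> S w =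
     (\<Sum>x\<in>S. (w x * intensity \<beta> x) *\<^sub>R (\<chi> i j. regf x $ i * regf x $ j))"

definition locally_D_optimal :: "real^7 \<Rightarrow> (real^3) set \<Rightarrow> (real^3) set \<Rightarrow> (real^3 \<Rightarrow> real) \<Rightarrow> bool" where
  "locally_D_optimal \<beta> X S w \<longleftrightarrow> is_design X S w \<and>
     (\<forall>S' w'. is_design X S' w' \<longrightarrow> det (info_matrix \<beta> S' w') \<le> det (info_matrix \<beta> S w))"

end

theory Submission
  imports Defs
begin


definition psd :: "real^'n^'n \<Rightarrow> bool" where
  "psd U \<longleftrightarrow> (\<forall>x. 0 \<le> x \<bullet> (U *v x))"

definition elimE :: "'n \<Rightarrow> ('n \<Rightarrow> real) \<Rightarrow> real^'n^'n" where
  "elimE p c = (\<chi> i j. (if i = j then 1 else 0) - (if j = p \<and> i \<noteq> p then c i else 0))"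

lemma elimE_left: "(elimE p c ** A) $ i $ l = A$i$l - (if i \<noteq> p then c i * A$p$l else 0)"
  for A :: "real^'n^'n"
proof -
  have "(elimE p c ** A) $ i $ l = (\<Sum>k\<in>UNIV. ((if i = k then 1 else 0) - (if k = p \<and> i \<noteq> p then c i else 0)) * A$k$l)"
    by (simp add: matrix_matrix_mult_def elimE_def)
  also have "\<dots> = (\<Sum>k\<in>UNIV. (if i = k then A$k$l else 0)) - (\<Sum>k\<in>UNIV. (if k = p then (if i \<noteq> p then c i * A$k$l else 0) else 0))"
    by (subst sum_subtractf[symmetric], rule sum.cong) auto
  also have "\<dots> = A$i$l - (if i \<noteq> p then c i * A$p$l else 0)"
    by simp
  finally show ?thesis .
qed

lemma elimE_right: "(A ** transpose (elimE p c)) $ i $ j = A$i$j - (if j \<noteq> p then c j * A$i$p else 0)"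
  for A :: "real^'n^'n"
proof -
  have "(A ** transpose (elimE p c)) $ i $ j = (\<Sum>k\<in>UNIV. A$i$k * ((if j = k then 1 else 0) - (if k = p \<and> j \<noteq> p then c j else 0)))"
    by (simp add: matrix_matrix_mult_def elimE_def transpose_def)
  also have "\<dots> = (\<Sum>k\<in>UNIV. (if j = k then A$i$k else 0)) - (\<Sum>k\<in>UNIV. (if k = p then (if j \<noteq> p then c j * A$i$k else 0) else 0))"
    by (subst sum_subtractf[symmetric], rule sum.cong) auto
  also have "\<dots> = A$i$j - (if j \<noteq> p then c j * A$i$p else 0)"
    by simp
  finally show ?thesis .
qed

lemma det_elimE: "det (elimE p c) = 1"
proof -
  let ?I = "mat 1 :: real^'n^'n"
  define x where "x = - (\<Sum>j\<in>UNIV - {p}. c j *s row j ?I)"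
  have xs: "x \<in> vec.span {row j ?I |j. j \<noteq> p}"
    unfolding x_def
    by (intro vec.span_neg vec.span_sum vec.span_scale vec.span_base) auto
  have "transpose (elimE p c) = (\<chi> k. if k = p then row p ?I + x else row k ?I)"
  proof -
    have "x $ j = - (if j \<noteq> p then c j else 0)" for j
      unfolding x_def by (simp add: sum_component row_def mat_def if_distrib cong: if_cong)
    then show ?thesis
      by (auto simp: vec_eq_iff transpose_def elimE_def row_def mat_def)
  qed
  hence "det (transpose (elimE p c)) = det ?I"
    using det_row_span[OF xs] by simp
  thus ?thesis by simp
qed


lemma mv_axis: "(U *v axis j b) $ i = U$i$j * (b::real)"
  for U :: "real^'n^'n"
  by (simp add: matrix_vector_mult_def axis_def if_distrib cong: if_cong)

lemma axis_quad: "axis i a \<bullet> (U *v axis j b) = a * b * U$i$j"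
  for U :: "real^'n^'n"
  by (simp add: inner_axis' mv_axis)

lemma quad_congr: "x \<bullet> ((E ** U ** transpose E) *v x) = (x v* E) \<bullet> (U *v (x v* E))"
  for U :: "real^'n^'n" and E :: "real^'n^'m"
  by (simp add: matrix_vector_mul_assoc[symmetric] dot_lmul_matrix[symmetric])

lemma psd_congr: assumes "psd U" shows "psd (E ** U ** transpose E)"
  unfolding psd_def
proof
  fix x
  have "0 \<le> (x v* E) \<bullet> (U *v (x v* E))" using assms unfolding psd_def by blast
  thus "0 \<le> x \<bullet> ((E ** U ** transpose E) *v x)" by (simp only: quad_congr)
qed

lemma psd_diag: "psd U \<Longrightarrow> 0 \<le> U$i$i"
  unfolding psd_def using axis_quad[of i 1 U i 1] by (metis mult_1)

lemma psd_zero: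
  assumes "psd U" "transpose U = U" "U$p$p = 0"
  shows "U$p$k = 0"
proof (cases "k = p")
  case True then show ?thesis using assms by simp
next
  case False
  have sym: "U$k$p = U$p$k" using assms(2) by (metis transpose_def vec_lambda_beta)
  have "0 \<le> (axis p s + axis k 1) \<bullet> (U *v (axis p s + axis k 1))" for s
    using assms(1) unfolding psd_def by blast
  hence q: "0 \<le> 2 * s * U$p$k + U$k$k" for s
    by (simp add: matrix_vector_right_distrib inner_add_left inner_add_right axis_quad assms(3) sym algebra_simps)
  show ?thesis
  proof (rule ccontr)
    assume ne: "U$p$k \<noteq> 0"
    have "0 \<le> 2 * (- (U$k$k + 1) / (2 * U$p$k)) * U$p$k + U$k$k" by (rule q)
    also have "\<dots> = -1" using ne by (simp add: field_simps)
    finally show False by simp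
  qed
qed


lemma sym_entry: "transpose U = U \<Longrightarrow> U$k$p = U$p$k"
  by (metis transpose_def vec_lambda_beta)

lemma elim_step:
  fixes U :: "real^'n^'n" and p :: 'n
  assumes sym: "transpose U = U" and ps: "psd U"
  defines "c \<equiv> (\<lambda>i. U$i$p / U$p$p)"
  defines "U' \<equiv> elimE p c ** U ** transpose (elimE p c)"
  shows "det U' = det U" "transpose U' = U'" "psd U'"
    "\<And>k. k \<noteq> p \<Longrightarrow> U'$p$k = 0"
    "\<And>q. q \<noteq> p \<Longrightarrow> (\<forall>k. k \<noteq> q \<longrightarrow> U$q$k = 0) \<Longrightarrow> (\<forall>k. k \<noteq> q \<longrightarrow> U'$q$k = 0)"
    "\<And>i. 0 \<le> U'$i$i \<and> U'$i$i \<le> U$i$i"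
proof -
  let ?E = "elimE p c"
  show "det U' = det U"
    unfolding U'_def by (simp add: det_mul det_elimE)
  show "transpose U' = U'"
    unfolding U'_def by (simp add: matrix_transpose_mul sym matrix_mul_assoc)
  show psU': "psd U'" unfolding U'_def by (rule psd_congr[OF ps])
  have EU: "(?E ** U)$i$l = U$i$l - (if i \<noteq> p then c i * U$p$l else 0)" for i l
    by (rule elimE_left)
  have U'e: "U'$i$j = (?E ** U)$i$j - (if j \<noteq> p then c j * (?E ** U)$i$p else 0)" for i j
    unfolding U'_def by (rule elimE_right)
  have cU: "c i * U$p$l = U$i$p * U$p$l / U$p$p" for i l
    by (simp add: c_def)
  have EUp: "(?E ** U)$i$p = 0" if "i \<noteq> p" for i
  proof (cases "U$p$p = 0")
    case True
    hence "U$p$i = 0" by (rule psd_zero[OF ps sym])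
    hence "U$i$p = 0" using sym_entry[OF sym, of i p] by simp
    thus ?thesis using that by (simp only: EU, simp add: c_def)
  next
    case False
    thus ?thesis using that by (simp only: EU, simp add: c_def)
  qed
  show "U'$p$k = 0" if "k \<noteq> p" for k
  proof (cases "U$p$p = 0")
    case True
    hence "U$p$k = 0" by (rule psd_zero[OF ps sym])
    thus ?thesis using that True by (simp only: U'e EU, simp add: c_def)
  next
    case False
    thus ?thesis using that sym_entry[OF sym, of k p] by (simp only: U'e EU, simp add: c_def)
  qed
  show "\<forall>k. k \<noteq> q \<longrightarrow> U'$q$k = 0" if "q \<noteq> p" "\<forall>k. k \<noteq> q \<longrightarrow> U$q$k = 0" for q
  proof (intro allI impI)
    fix k assume "k \<noteq> q"
    have "U$q$p = 0" using that by auto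
    hence "c q = 0" by (simp add: c_def)
    thus "U'$q$k = 0" using that \<open>k \<noteq> q\<close> EUp[of q] by (simp add: U'e EU)
  qed
  show "0 \<le> U'$i$i \<and> U'$i$i \<le> U$i$i" for i
  proof
    show "0 \<le> U'$i$i" by (rule psd_diag[OF psU'])
    show "U'$i$i \<le> U$i$i"
    proof (cases "i = p")
      case True thus ?thesis by (simp add: U'e EU)
    next
      case False
      have "U'$i$i = U$i$i - c i * U$p$i" using False EUp[OF False] by (simp add: U'e EU)
      also have "\<dots> \<le> U$i$i"
      proof -
        have "0 \<le> U$p$p" by (rule psd_diag[OF ps])
        hence "0 \<le> U$i$p * U$i$p / U$p$p" by simp
        thus ?thesis using sym_entry[OF sym, of p i] by (simp add: c_def)
      qed
      finally show ?thesis .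
    qed
  qed
qed

lemma hadamard_aux:
  fixes R :: "'n::finite set"
  assumes "finite R"
  shows "\<forall>U::real^'n^'n. transpose U = U \<longrightarrow> psd U \<longrightarrow> (\<forall>q. q \<notin> R \<longrightarrow> (\<forall>k. k \<noteq> q \<longrightarrow> U$q$k = 0))
     \<longrightarrow> det U \<le> (\<Prod>i\<in>UNIV. U$i$i)"
  using assms
proof (induction R rule: finite_induct)
  case empty
  show ?case
  proof (intro allI impI)
    fix U :: "real^'n^'n"
    assume "\<forall>q. q \<notin> {} \<longrightarrow> (\<forall>k. k \<noteq> q \<longrightarrow> U$q$k = 0)"
    hence "det U = (\<Prod>i\<in>UNIV. U$i$i)" by (intro det_diagonal) auto
    thus "det U \<le> (\<Prod>i\<in>UNIV. U$i$i)" by simp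
  qed
next
  case (insert p R)
  show ?case
  proof (intro allI impI)
    fix U :: "real^'n^'n"
    assume sym: "transpose U = U" and ps: "psd U"
      and cl: "\<forall>q. q \<notin> insert p R \<longrightarrow> (\<forall>k. k \<noteq> q \<longrightarrow> U$q$k = 0)"
    define c where "c = (\<lambda>i. U$i$p / U$p$p)"
    define U' where "U' = elimE p c ** U ** transpose (elimE p c)"
    note st = elim_step[OF sym ps, where p=p, folded c_def, folded U'_def]
    have cl': "\<forall>q. q \<notin> R \<longrightarrow> (\<forall>k. k \<noteq> q \<longrightarrow> U'$q$k = 0)"
    proof (intro allI impI)
      fix q k assume "q \<notin> R" "k \<noteq> q"
      show "U'$q$k = 0"
      proof (cases "q = p")
        case True thus ?thesis using st(4) \<open>k \<noteq> q\<close> by simp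
      next
        case False
        hence "\<forall>k. k \<noteq> q \<longrightarrow> U$q$k = 0" using cl \<open>q \<notin> R\<close> by auto
        thus ?thesis using st(5)[OF False] \<open>k \<noteq> q\<close> by blast
      qed
    qed
    have "det U' \<le> (\<Prod>i\<in>UNIV. U'$i$i)" using insert.IH st(2) st(3) cl' by blast
    also have "\<dots> \<le> (\<Prod>i\<in>UNIV. U$i$i)"
      by (rule prod_mono) (use st(6) in blast)
    finally show "det U \<le> (\<Prod>i\<in>UNIV. U$i$i)" using st(1) by simp
  qed
qed

lemma hadamard_psd:
  fixes U :: "real^'n^'n"
  assumes "transpose U = U" "psd U"
  shows "det U \<le> (\<Prod>i\<in>UNIV. U$i$i)"
  using hadamard_aux[of "UNIV :: 'n set"] assms by simp


definition qq :: real where "qq = exp 1 ^ 2"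

lemma e_bounds: "2718/1000 \<le> exp (1::real)" "exp (1::real) \<le> 2719/1000"
  using e_approx_32 by (simp_all add: abs_if split: if_split_asm)

lemma qq_bounds: "738/100 \<le> qq" "qq \<le> 74/10" "5446/100 \<le> qq^2" "qq^2 \<le> 5476/100"
   "401 \<le> qq^3" "qq^3 \<le> 406" 
proof -
  have a: "2718/1000 \<le> exp (1::real)" "exp (1::real) \<le> 2719/1000" by (rule e_bounds)+
  have h1: "(2718/1000)^2 \<le> qq" unfolding qq_def by (rule power_mono[OF a(1)]) simp
  have h2: "qq \<le> (2719/1000)^2" unfolding qq_def by (rule power_mono[OF a(2)]) simp
  have q3: "qq^3 = exp 1 ^ 6" "qq^2 = exp 1 ^ 4" by (simp_all add: qq_def flip: power_mult)
  have h3: "(2718/1000)^6 \<le> qq^3" unfolding q3 by (rule power_mono[OF a(1)]) simp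
  have h4: "qq^3 \<le> (2719/1000)^6" unfolding q3 by (rule power_mono[OF a(2)]) simp
  have h5: "(2718/1000)^4 \<le> qq^2" unfolding q3 by (rule power_mono[OF a(1)]) simp
  have h6: "qq^2 \<le> (2719/1000)^4" unfolding q3 by (rule power_mono[OF a(2)]) simp
  show "738/100 \<le> qq" using h1 by (simp add: power2_eq_square)
  show "qq \<le> 74/10" using h2 by (simp add: power2_eq_square)
  show "401 \<le> qq^3" using h3 by (simp add: power_divide)
  show "qq^3 \<le> 406" using h4 by (simp add: power_divide)
  show "5446/100 \<le> qq^2" using h5 by (simp add: power_divide)
  show "qq^2 \<le> 5476/100" using h6 by (simp add: power_divide)
qed

lemma exp_taylor3: "1 + x + x^2/2 + x^3/6 \<le> exp (x::real)"
proof -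
  obtain t where t: "exp x = (\<Sum>m<4. x ^ m / fact m) + exp t / fact 4 * x ^ 4"
    using Maclaurin_exp_le[of x 4] by blast
  have "0 \<le> exp t / fact 4 * x ^ 4" by simp
  moreover have "(\<Sum>m<4. x ^ m / fact m) = 1 + x + x^2/2 + x^3/6"
    by (simp add: eval_nat_numeral fact_numeral)
  ultimately show ?thesis using t by linarith
qed

lemma L3: "0 \<le> t \<Longrightarrow> 1 + 2*t + 2*t^2 \<le> exp (2*t::real)"
  using exp_lower_Taylor_quadratic[of "2*t"] by (simp add: power2_eq_square)

lemma L2: assumes "0 \<le> t" shows "1 + 21/4*t^2 \<le> exp (2*t::real)"
proof -
  have a: "1 + 2*t + 2*t^2 + 4/3*t^3 \<le> exp (2*t)"
    using exp_taylor3[of "2*t"] by (simp add: power2_eq_square power3_eq_cube algebra_simps)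
  have "0 \<le> 4/3*(t - 39/32)^2 + (2 - 4/3*(39/32)^2)" by (simp add: power2_eq_square)
  hence "0 \<le> t * (4/3*(t - 39/32)^2 + (2 - 4/3*(39/32)^2))" using assms by simp
  hence "0 \<le> 2*t - 13/4*t^2 + 4/3*t^3" by (simp add: power2_eq_square power3_eq_cube algebra_simps)
  with a show ?thesis by linarith
qed

lemma exp2_qq: "exp (2*t) = qq * exp (2*(t-1::real))"
proof -
  have "exp (2*t) = exp (1 + 1 + 2*(t-1))" by simp
  also have "... = exp 1 * exp 1 * exp (2*(t-1))" by (simp only: exp_add)
  finally show ?thesis by (simp add: qq_def power2_eq_square)
qed

lemma L1: assumes "0 \<le> t" shows "1 - 2*t + (1+qq)*t^2 \<le> exp (2*t::real)"
proof -
  have qb: "738/100 \<le> qq" "qq \<le> 74/10" using qq_bounds by auto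
  consider "t \<le> 3/5" | "3/5 \<le> t" "t \<le> 1" | "1 \<le> t" by linarith
  then show ?thesis
  proof cases
    case 1
    have "(qq - 1)*t \<le> (64/10)*(3/5)"
      by (rule mult_mono) (use qb 1 assms in auto)
    hence "0 \<le> t * (4 - (qq - 1)*t)"
      using assms by (intro mult_nonneg_nonneg) auto
    moreover have "1 + 2*t + 2*t^2 \<le> exp (2*t)" by (rule L3[OF assms])
    moreover have "1 - 2*t + (1+qq)*t^2 = (1 + 2*t + 2*t^2) - t * (4 - (qq - 1)*t)"
      by (simp add: power2_eq_square algebra_simps)
    ultimately show ?thesis by linarith
  next
    case 2
    define u where "u = t - 1"
    have u: "-2/5 \<le> u" "u \<le> 0" using 2 by (auto simp: u_def)
    have "1 + 2*u + 2*u^2 + 4/3*u^3 \<le> exp (2*u)"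
      using exp_taylor3[of "2*u"] by (simp add: power2_eq_square power3_eq_cube algebra_simps)
    hence "qq * (1 + 2*u + 2*u^2 + 4/3*u^3) \<le> qq * exp (2*u)"
      using qb by (intro mult_left_mono) auto
    hence A: "qq * (1 + 2*u + 2*u^2 + 4/3*u^3) \<le> exp (2*t)"
      using exp2_qq[of t] by (simp add: u_def)
    have "qq * (-2/5) \<le> qq * u" using qb u by (intro mult_left_mono) auto
    hence "0 \<le> qq - 1 + 4/3*qq*u" using qb by linarith
    hence "0 \<le> u^2 * (qq - 1 + 4/3*qq*u)" by simp
    moreover have "qq * (1 + 2*u + 2*u^2 + 4/3*u^3) - (1 - 2*t + (1+qq)*t^2) = u^2 * (qq - 1 + 4/3*qq*u)"
      by (simp add: u_def power2_eq_square power3_eq_cube field_simps) 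
    ultimately have "1 - 2*t + (1+qq)*t^2 \<le> qq * (1 + 2*u + 2*u^2 + 4/3*u^3)" by linarith
    with A show ?thesis by linarith
  next
    case 3
    define u where "u = t - 1"
    have u: "0 \<le> u" using 3 by (auto simp: u_def)
    have "qq * (1 + 2*u + 2*u^2) \<le> qq * exp (2*u)"
      using qb L3[OF u] by (intro mult_left_mono) auto
    hence A: "qq * (1 + 2*u + 2*u^2) \<le> exp (2*t)"
      using exp2_qq[of t] by (simp add: u_def)
    have "0 \<le> u^2 * (qq - 1)" using qb by simp
    moreover have "qq * (1 + 2*u + 2*u^2) - (1 - 2*t + (1+qq)*t^2) = u^2 * (qq - 1)"
      by (simp add: u_def power2_eq_square field_simps) 
    ultimately have "1 - 2*t + (1+qq)*t^2 \<le> qq * (1 + 2*u + 2*u^2)" by linarith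
    with A show ?thesis by linarith
  qed
qed

lemma QL:
  fixes t A B C L :: real
  assumes t: "0 \<le> t" and a: "A \<le> L" "B \<le> L" "- B \<le> L"
    "C - (qq - 17/4)*B \<le> 21/4 * L" "C - 13/4*B \<le> 21/4 * L"
  shows "A - 2*B*t + C*t^2 \<le> L * exp (2*t)"
proof (cases "0 \<le> B")
  case True
  have "0 \<le> (L - B) * (exp (2*t) - (1 + 21/4*t^2))"
    using a L2[OF t] by (intro mult_nonneg_nonneg) auto
  moreover have "0 \<le> B * (exp (2*t) - (1 - 2*t + (1+qq)*t^2))"
    using True L1[OF t] by (intro mult_nonneg_nonneg) auto
  moreover have "0 \<le> (21/4 * L - (C - (qq - 17/4)*B)) * t^2"
    using a by (intro mult_nonneg_nonneg) auto
  moreover have "L * exp (2*t) - (A - 2*B*t + C*t^2) = (L - B) * (exp (2*t) - (1 + 21/4*t^2))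
     + B * (exp (2*t) - (1 - 2*t + (1+qq)*t^2)) + (21/4 * L - (C - (qq - 17/4)*B)) * t^2 + (L - A)"
    by (simp add: field_simps)
  ultimately show ?thesis using a by linarith
next
  case False
  have "0 \<le> (L + B) * (exp (2*t) - (1 + 21/4*t^2))"
    using a L2[OF t] by (intro mult_nonneg_nonneg) auto
  moreover have "0 \<le> (-B) * (exp (2*t) - (1 + 2*t + 2*t^2))"
    using False L3[OF t] by (intro mult_nonneg_nonneg) auto
  moreover have "0 \<le> (21/4 * L - (C - 13/4*B)) * t^2"
    using a by (intro mult_nonneg_nonneg) auto
  moreover have "L * exp (2*t) - (A - 2*B*t + C*t^2) = (L + B) * (exp (2*t) - (1 + 21/4*t^2))
     + (-B) * (exp (2*t) - (1 + 2*t + 2*t^2)) + (21/4 * L - (C - 13/4*B)) * t^2 + (L - A)"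
    by (simp add: field_simps)
  ultimately show ?thesis using a by linarith
qed

lemma QLK:
  fixes t A B C L K :: real
  assumes "0 \<le> t" "A \<le> L" "B \<le> L" "- B \<le> L"
    "C - (qq - 17/4)*B \<le> K" "C - 13/4*B \<le> K" "K = 21/4 * L"
  shows "A - 2*B*t + C*t^2 \<le> L * exp (2*t)"
  using QL[of t A L B C] assms by simp


lemma nd4: "(1::real) \<le> 1"
  using qq_bounds by linarith

lemma nd5: "((-1)::real) \<le> 1"
  using qq_bounds by linarith

lemma nd6: "((21/4)::real) \<le> (21/4)"
  using qq_bounds by linarith

lemma nd7: "((-9/4)+qq::real) \<le> (21/4)"
  using qq_bounds by linarith

lemma nd3:
  assumes "0 \<le> t1"
  shows "(((1) + ((-2))*t1 + (1+qq)*t1^2)::real) \<le> 1 * exp(2*t1)"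
proof -
  have e: "(((1) + ((-2))*t1 + (1+qq)*t1^2)::real) = (((1))::real) - 2*((((1))::real))*t1 + ((((1+qq))::real))*t1^2" by (simp add: field_simps power2_eq_square power3_eq_cube)
  have q3: "((((-1)))::real) = - ((((1))::real))" by (simp add: field_simps power2_eq_square power3_eq_cube)
  have q4: "((((21/4)))::real) = ((((1+qq))::real)) - (qq - 17/4)*((((1))::real))" by (simp add: field_simps power2_eq_square power3_eq_cube)
  have q5: "((((-9/4)+qq))::real) = ((((1+qq))::real)) - 13/4*((((1))::real))" by (simp add: field_simps power2_eq_square power3_eq_cube)
  have c1: "(((1))::real) \<le> 1" by (rule nd4)
  have c2: "(((1))::real) \<le> 1" by (rule nd4)
  have c3: "- ((((1))::real)) \<le> 1" using q3 nd5 by metis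
  have c4: "((((1+qq))::real)) - (qq - 17/4)*((((1))::real)) \<le> (21/4)" using q4 nd6 by metis
  have c5: "((((1+qq))::real)) - 13/4*((((1))::real)) \<le> (21/4)" using q5 nd7 by metis
  have kk: "((21/4)::real) = 21/4 * (1)" by simp
  show ?thesis unfolding e by (rule QLK[OF assms(1) c1 c2 c3 c4 c5 kk])
qed

lemma nd9: "((-21/4)::real) \<le> (21/4)"
  using qq_bounds by linarith

lemma nd10: "((9/4)+(-1)*qq::real) \<le> (21/4)"
  using qq_bounds by linarith

lemma nd8:
  assumes "0 \<le> t1"
  shows "((((-1)) + (2)*t1 + ((-1)+(-1)*qq)*t1^2)::real) \<le> 1 * exp(2*t1)"
proof -
  have e: "((((-1)) + (2)*t1 + ((-1)+(-1)*qq)*t1^2)::real) = ((((-1)))::real) - 2*(((((-1)))::real))*t1 + (((((-1)+(-1)*qq))::real))*t1^2" by (simp add: field_simps power2_eq_square power3_eq_cube)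
  have q3: "(((1))::real) = - (((((-1)))::real))" by (simp add: field_simps power2_eq_square power3_eq_cube)
  have q4: "((((-21/4)))::real) = (((((-1)+(-1)*qq))::real)) - (qq - 17/4)*(((((-1)))::real))" by (simp add: field_simps power2_eq_square power3_eq_cube)
  have q5: "((((9/4)+(-1)*qq))::real) = (((((-1)+(-1)*qq))::real)) - 13/4*(((((-1)))::real))" by (simp add: field_simps power2_eq_square power3_eq_cube)
  have c1: "((((-1)))::real) \<le> 1" by (rule nd5)
  have c2: "((((-1)))::real) \<le> 1" by (rule nd5)
  have c3: "- (((((-1)))::real)) \<le> 1" using q3 nd4 by metis
  have c4: "(((((-1)+(-1)*qq))::real)) - (qq - 17/4)*(((((-1)))::real)) \<le> (21/4)" using q4 nd9 by metis
  have c5: "(((((-1)+(-1)*qq))::real)) - 13/4*(((((-1)))::real)) \<le> (21/4)" using q5 nd10 by metis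
  have kk: "((21/4)::real) = 21/4 * (1)" by simp
  show ?thesis unfolding e by (rule QLK[OF assms(1) c1 c2 c3 c4 c5 kk])
qed

lemma nd12: "((441/16)::real) \<le> (441/16)"
  using qq_bounds by linarith

lemma nd13: "((-189/16)+(21/4)*qq::real) \<le> (441/16)"
  using qq_bounds by linarith

lemma nd11:
  assumes "0 \<le> t1"
  shows "((((21/4)) + ((-21/2))*t1 + ((21/4)+(21/4)*qq)*t1^2)::real) \<le> (21/4) * exp(2*t1)"
proof -
  have e: "((((21/4)) + ((-21/2))*t1 + ((21/4)+(21/4)*qq)*t1^2)::real) = ((((21/4)))::real) - 2*(((((21/4)))::real))*t1 + (((((21/4)+(21/4)*qq))::real))*t1^2" by (simp add: field_simps power2_eq_square power3_eq_cube)
  have q3: "((((-21/4)))::real) = - (((((21/4)))::real))" by (simp add: field_simps power2_eq_square power3_eq_cube)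
  have q4: "((((441/16)))::real) = (((((21/4)+(21/4)*qq))::real)) - (qq - 17/4)*(((((21/4)))::real))" by (simp add: field_simps power2_eq_square power3_eq_cube)
  have q5: "((((-189/16)+(21/4)*qq))::real) = (((((21/4)+(21/4)*qq))::real)) - 13/4*(((((21/4)))::real))" by (simp add: field_simps power2_eq_square power3_eq_cube)
  have c1: "((((21/4)))::real) \<le> (21/4)" by (rule nd6)
  have c2: "((((21/4)))::real) \<le> (21/4)" by (rule nd6)
  have c3: "- (((((21/4)))::real)) \<le> (21/4)" using q3 nd9 by metis
  have c4: "(((((21/4)+(21/4)*qq))::real)) - (qq - 17/4)*(((((21/4)))::real)) \<le> (441/16)" using q4 nd12 by metis
  have c5: "(((((21/4)+(21/4)*qq))::real)) - 13/4*(((((21/4)))::real)) \<le> (441/16)" using q5 nd13 by metis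
  have kk: "((441/16)::real) = 21/4 * ((21/4))" by simp
  show ?thesis unfolding e by (rule QLK[OF assms(1) c1 c2 c3 c4 c5 kk])
qed

lemma nd15: "((81/16)+(-9/2)*qq+qq^2::real) \<le> (441/16)"
  using qq_bounds by linarith

lemma nd14:
  assumes "0 \<le> t1"
  shows "((((-9/4)+qq) + ((9/2)+(-2)*qq)*t1 + ((-9/4)+(-5/4)*qq+qq^2)*t1^2)::real) \<le> (21/4) * exp(2*t1)"
proof -
  have e: "((((-9/4)+qq) + ((9/2)+(-2)*qq)*t1 + ((-9/4)+(-5/4)*qq+qq^2)*t1^2)::real) = ((((-9/4)+qq))::real) - 2*(((((-9/4)+qq))::real))*t1 + (((((-9/4)+(-5/4)*qq+qq^2))::real))*t1^2" by (simp add: field_simps power2_eq_square power3_eq_cube)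
  have q3: "((((9/4)+(-1)*qq))::real) = - (((((-9/4)+qq))::real))" by (simp add: field_simps power2_eq_square power3_eq_cube)
  have q4: "((((-189/16)+(21/4)*qq))::real) = (((((-9/4)+(-5/4)*qq+qq^2))::real)) - (qq - 17/4)*(((((-9/4)+qq))::real))" by (simp add: field_simps power2_eq_square power3_eq_cube)
  have q5: "((((81/16)+(-9/2)*qq+qq^2))::real) = (((((-9/4)+(-5/4)*qq+qq^2))::real)) - 13/4*(((((-9/4)+qq))::real))" by (simp add: field_simps power2_eq_square power3_eq_cube)
  have c1: "((((-9/4)+qq))::real) \<le> (21/4)" by (rule nd7)
  have c2: "((((-9/4)+qq))::real) \<le> (21/4)" by (rule nd7)
  have c3: "- (((((-9/4)+qq))::real)) \<le> (21/4)" using q3 nd10 by metis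
  have c4: "(((((-9/4)+(-5/4)*qq+qq^2))::real)) - (qq - 17/4)*(((((-9/4)+qq))::real)) \<le> (441/16)" using q4 nd13 by metis
  have c5: "(((((-9/4)+(-5/4)*qq+qq^2))::real)) - 13/4*(((((-9/4)+qq))::real)) \<le> (441/16)" using q5 nd15 by metis
  have kk: "((441/16)::real) = 21/4 * ((21/4))" by simp
  show ?thesis unfolding e by (rule QLK[OF assms(1) c1 c2 c3 c4 c5 kk])
qed

lemma nd2:
  assumes "0 \<le> t1" "0 \<le> t2"
  shows "(((1) + ((-2))*t2 + (1+qq)*t2^2 + ((-2))*t1 + (4)*t1*t2 + ((-2)+(-2)*qq)*t1*t2^2 + (1+qq)*t1^2 + ((-2)+(-2)*qq)*t1^2*t2 + (1+2*qq+qq^2)*t1^2*t2^2)::real) \<le> 1 * exp(2*t1) * exp(2*t2)"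
proof -
  have e: "(((1) + ((-2))*t2 + (1+qq)*t2^2 + ((-2))*t1 + (4)*t1*t2 + ((-2)+(-2)*qq)*t1*t2^2 + (1+qq)*t1^2 + ((-2)+(-2)*qq)*t1^2*t2 + (1+2*qq+qq^2)*t1^2*t2^2)::real) = (((1) + ((-2))*t1 + (1+qq)*t1^2)::real) - 2*((((1) + ((-2))*t1 + (1+qq)*t1^2)::real))*t2 + ((((1+qq) + ((-2)+(-2)*qq)*t1 + (1+2*qq+qq^2)*t1^2)::real))*t2^2" by (simp add: field_simps power2_eq_square power3_eq_cube)
  have q3: "((((-1)) + (2)*t1 + ((-1)+(-1)*qq)*t1^2)::real) = - ((((1) + ((-2))*t1 + (1+qq)*t1^2)::real))" by (simp add: field_simps power2_eq_square power3_eq_cube)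
  have q4: "((((21/4)) + ((-21/2))*t1 + ((21/4)+(21/4)*qq)*t1^2)::real) = ((((1+qq) + ((-2)+(-2)*qq)*t1 + (1+2*qq+qq^2)*t1^2)::real)) - (qq - 17/4)*((((1) + ((-2))*t1 + (1+qq)*t1^2)::real))" by (simp add: field_simps power2_eq_square power3_eq_cube)
  have q5: "((((-9/4)+qq) + ((9/2)+(-2)*qq)*t1 + ((-9/4)+(-5/4)*qq+qq^2)*t1^2)::real) = ((((1+qq) + ((-2)+(-2)*qq)*t1 + (1+2*qq+qq^2)*t1^2)::real)) - 13/4*((((1) + ((-2))*t1 + (1+qq)*t1^2)::real))" by (simp add: field_simps power2_eq_square power3_eq_cube)
  have c1: "(((1) + ((-2))*t1 + (1+qq)*t1^2)::real) \<le> 1 * exp(2*t1)" by (rule nd3[OF assms(1)])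
  have c2: "(((1) + ((-2))*t1 + (1+qq)*t1^2)::real) \<le> 1 * exp(2*t1)" by (rule nd3[OF assms(1)])
  have c3: "- ((((1) + ((-2))*t1 + (1+qq)*t1^2)::real)) \<le> 1 * exp(2*t1)" using q3 nd8[OF assms(1)] by metis
  have c4: "((((1+qq) + ((-2)+(-2)*qq)*t1 + (1+2*qq+qq^2)*t1^2)::real)) - (qq - 17/4)*((((1) + ((-2))*t1 + (1+qq)*t1^2)::real)) \<le> (21/4) * exp(2*t1)" using q4 nd11[OF assms(1)] by metis
  have c5: "((((1+qq) + ((-2)+(-2)*qq)*t1 + (1+2*qq+qq^2)*t1^2)::real)) - 13/4*((((1) + ((-2))*t1 + (1+qq)*t1^2)::real)) \<le> (21/4) * exp(2*t1)" using q5 nd14[OF assms(1)] by metis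
  have kk: "((21/4) * exp(2*t1)::real) = 21/4 * (1 * exp(2*t1))" by simp
  show ?thesis unfolding e by (rule QLK[OF assms(2) c1 c2 c3 c4 c5 kk])
qed

lemma nd18: "((3/4)::real) \<le> 1"
  using qq_bounds by linarith

lemma nd19: "((-3/4)::real) \<le> 1"
  using qq_bounds by linarith

lemma nd20: "((59/16)+(-1/4)*qq::real) \<le> (21/4)"
  using qq_bounds by linarith

lemma nd21: "((-31/16)+(1/2)*qq::real) \<le> (21/4)"
  using qq_bounds by linarith

lemma nd17:
  assumes "0 \<le> t1"
  shows "(((1) + ((-3/2))*t1 + ((1/2)+(1/2)*qq)*t1^2)::real) \<le> 1 * exp(2*t1)"
proof -
  have e: "(((1) + ((-3/2))*t1 + ((1/2)+(1/2)*qq)*t1^2)::real) = (((1))::real) - 2*(((((3/4)))::real))*t1 + (((((1/2)+(1/2)*qq))::real))*t1^2" by (simp add: field_simps power2_eq_square power3_eq_cube)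
  have q3: "((((-3/4)))::real) = - (((((3/4)))::real))" by (simp add: field_simps power2_eq_square power3_eq_cube)
  have q4: "((((59/16)+(-1/4)*qq))::real) = (((((1/2)+(1/2)*qq))::real)) - (qq - 17/4)*(((((3/4)))::real))" by (simp add: field_simps power2_eq_square power3_eq_cube)
  have q5: "((((-31/16)+(1/2)*qq))::real) = (((((1/2)+(1/2)*qq))::real)) - 13/4*(((((3/4)))::real))" by (simp add: field_simps power2_eq_square power3_eq_cube)
  have c1: "(((1))::real) \<le> 1" by (rule nd4)
  have c2: "((((3/4)))::real) \<le> 1" by (rule nd18)
  have c3: "- (((((3/4)))::real)) \<le> 1" using q3 nd19 by metis
  have c4: "(((((1/2)+(1/2)*qq))::real)) - (qq - 17/4)*(((((3/4)))::real)) \<le> (21/4)" using q4 nd20 by metis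
  have c5: "(((((1/2)+(1/2)*qq))::real)) - 13/4*(((((3/4)))::real)) \<le> (21/4)" using q5 nd21 by metis
  have kk: "((21/4)::real) = 21/4 * (1)" by simp
  show ?thesis unfolding e by (rule QLK[OF assms(1) c1 c2 c3 c4 c5 kk])
qed

lemma nd23: "((-59/16)+(1/4)*qq::real) \<le> (21/4)"
  using qq_bounds by linarith

lemma nd24: "((31/16)+(-1/2)*qq::real) \<le> (21/4)"
  using qq_bounds by linarith

lemma nd22:
  assumes "0 \<le> t1"
  shows "((((-1)) + ((3/2))*t1 + ((-1/2)+(-1/2)*qq)*t1^2)::real) \<le> 1 * exp(2*t1)"
proof -
  have e: "((((-1)) + ((3/2))*t1 + ((-1/2)+(-1/2)*qq)*t1^2)::real) = ((((-1)))::real) - 2*(((((-3/4)))::real))*t1 + (((((-1/2)+(-1/2)*qq))::real))*t1^2" by (simp add: field_simps power2_eq_square power3_eq_cube)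
  have q3: "((((3/4)))::real) = - (((((-3/4)))::real))" by (simp add: field_simps power2_eq_square power3_eq_cube)
  have q4: "((((-59/16)+(1/4)*qq))::real) = (((((-1/2)+(-1/2)*qq))::real)) - (qq - 17/4)*(((((-3/4)))::real))" by (simp add: field_simps power2_eq_square power3_eq_cube)
  have q5: "((((31/16)+(-1/2)*qq))::real) = (((((-1/2)+(-1/2)*qq))::real)) - 13/4*(((((-3/4)))::real))" by (simp add: field_simps power2_eq_square power3_eq_cube)
  have c1: "((((-1)))::real) \<le> 1" by (rule nd5)
  have c2: "((((-3/4)))::real) \<le> 1" by (rule nd19)
  have c3: "- (((((-3/4)))::real)) \<le> 1" using q3 nd18 by metis
  have c4: "(((((-1/2)+(-1/2)*qq))::real)) - (qq - 17/4)*(((((-3/4)))::real)) \<le> (21/4)" using q4 nd23 by metis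
  have c5: "(((((-1/2)+(-1/2)*qq))::real)) - 13/4*(((((-3/4)))::real)) \<le> (21/4)" using q5 nd24 by metis
  have kk: "((21/4)::real) = 21/4 * (1)" by simp
  show ?thesis unfolding e by (rule QLK[OF assms(1) c1 c2 c3 c4 c5 kk])
qed

lemma nd26: "((1139/64)+(-25/8)*qq+(-1/4)*qq^2::real) \<le> (441/16)"
  using qq_bounds by linarith

lemma nd27: "((-631/64)+(39/16)*qq+(-1/2)*qq^2::real) \<le> (441/16)"
  using qq_bounds by linarith

lemma nd25:
  assumes "0 \<le> t1"
  shows "((((21/4)) + ((-59/8)+(1/2)*qq)*t1 + ((17/8)+(13/8)*qq+(-1/2)*qq^2)*t1^2)::real) \<le> (21/4) * exp(2*t1)"
proof -
  have e: "((((21/4)) + ((-59/8)+(1/2)*qq)*t1 + ((17/8)+(13/8)*qq+(-1/2)*qq^2)*t1^2)::real) = ((((21/4)))::real) - 2*(((((59/16)+(-1/4)*qq))::real))*t1 + (((((17/8)+(13/8)*qq+(-1/2)*qq^2))::real))*t1^2" by (simp add: field_simps power2_eq_square power3_eq_cube)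
  have q3: "((((-59/16)+(1/4)*qq))::real) = - (((((59/16)+(-1/4)*qq))::real))" by (simp add: field_simps power2_eq_square power3_eq_cube)
  have q4: "((((1139/64)+(-25/8)*qq+(-1/4)*qq^2))::real) = (((((17/8)+(13/8)*qq+(-1/2)*qq^2))::real)) - (qq - 17/4)*(((((59/16)+(-1/4)*qq))::real))" by (simp add: field_simps power2_eq_square power3_eq_cube)
  have q5: "((((-631/64)+(39/16)*qq+(-1/2)*qq^2))::real) = (((((17/8)+(13/8)*qq+(-1/2)*qq^2))::real)) - 13/4*(((((59/16)+(-1/4)*qq))::real))" by (simp add: field_simps power2_eq_square power3_eq_cube)
  have c1: "((((21/4)))::real) \<le> (21/4)" by (rule nd6)
  have c2: "((((59/16)+(-1/4)*qq))::real) \<le> (21/4)" by (rule nd20)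
  have c3: "- (((((59/16)+(-1/4)*qq))::real)) \<le> (21/4)" using q3 nd23 by metis
  have c4: "(((((17/8)+(13/8)*qq+(-1/2)*qq^2))::real)) - (qq - 17/4)*(((((59/16)+(-1/4)*qq))::real)) \<le> (441/16)" using q4 nd26 by metis
  have c5: "(((((17/8)+(13/8)*qq+(-1/2)*qq^2))::real)) - 13/4*(((((59/16)+(-1/4)*qq))::real)) \<le> (441/16)" using q5 nd27 by metis
  have kk: "((441/16)::real) = 21/4 * ((21/4))" by simp
  show ?thesis unfolding e by (rule QLK[OF assms(1) c1 c2 c3 c4 c5 kk])
qed

lemma nd29: "((299/64)+(-13/4)*qq::real) \<le> (441/16)"
  using qq_bounds by linarith

lemma nd28:
  assumes "0 \<le> t1"
  shows "((((-9/4)+qq) + ((31/8)+(-1)*qq)*t1 + ((-13/8)+(-13/8)*qq)*t1^2)::real) \<le> (21/4) * exp(2*t1)"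
proof -
  have e: "((((-9/4)+qq) + ((31/8)+(-1)*qq)*t1 + ((-13/8)+(-13/8)*qq)*t1^2)::real) = ((((-9/4)+qq))::real) - 2*(((((-31/16)+(1/2)*qq))::real))*t1 + (((((-13/8)+(-13/8)*qq))::real))*t1^2" by (simp add: field_simps power2_eq_square power3_eq_cube)
  have q3: "((((31/16)+(-1/2)*qq))::real) = - (((((-31/16)+(1/2)*qq))::real))" by (simp add: field_simps power2_eq_square power3_eq_cube)
  have q4: "((((-631/64)+(39/16)*qq+(-1/2)*qq^2))::real) = (((((-13/8)+(-13/8)*qq))::real)) - (qq - 17/4)*(((((-31/16)+(1/2)*qq))::real))" by (simp add: field_simps power2_eq_square power3_eq_cube)
  have q5: "((((299/64)+(-13/4)*qq))::real) = (((((-13/8)+(-13/8)*qq))::real)) - 13/4*(((((-31/16)+(1/2)*qq))::real))" by (simp add: field_simps power2_eq_square power3_eq_cube)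
  have c1: "((((-9/4)+qq))::real) \<le> (21/4)" by (rule nd7)
  have c2: "((((-31/16)+(1/2)*qq))::real) \<le> (21/4)" by (rule nd21)
  have c3: "- (((((-31/16)+(1/2)*qq))::real)) \<le> (21/4)" using q3 nd24 by metis
  have c4: "(((((-13/8)+(-13/8)*qq))::real)) - (qq - 17/4)*(((((-31/16)+(1/2)*qq))::real)) \<le> (441/16)" using q4 nd27 by metis
  have c5: "(((((-13/8)+(-13/8)*qq))::real)) - 13/4*(((((-31/16)+(1/2)*qq))::real)) \<le> (441/16)" using q5 nd29 by metis
  have kk: "((441/16)::real) = 21/4 * ((21/4))" by simp
  show ?thesis unfolding e by (rule QLK[OF assms(1) c1 c2 c3 c4 c5 kk])
qed

lemma nd16:
  assumes "0 \<le> t1" "0 \<le> t2"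
  shows "(((1) + ((-2))*t2 + (1+qq)*t2^2 + ((-2))*t1 + (3)*t1*t2 + ((-1)+(-1)*qq)*t1*t2^2 + (1+qq)*t1^2 + ((-1)+(-1)*qq)*t1^2*t2)::real) \<le> 1 * exp(2*t1) * exp(2*t2)"
proof -
  have e: "(((1) + ((-2))*t2 + (1+qq)*t2^2 + ((-2))*t1 + (3)*t1*t2 + ((-1)+(-1)*qq)*t1*t2^2 + (1+qq)*t1^2 + ((-1)+(-1)*qq)*t1^2*t2)::real) = (((1) + ((-2))*t1 + (1+qq)*t1^2)::real) - 2*((((1) + ((-3/2))*t1 + ((1/2)+(1/2)*qq)*t1^2)::real))*t2 + ((((1+qq) + ((-1)+(-1)*qq)*t1)::real))*t2^2" by (simp add: field_simps power2_eq_square power3_eq_cube)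
  have q3: "((((-1)) + ((3/2))*t1 + ((-1/2)+(-1/2)*qq)*t1^2)::real) = - ((((1) + ((-3/2))*t1 + ((1/2)+(1/2)*qq)*t1^2)::real))" by (simp add: field_simps power2_eq_square power3_eq_cube)
  have q4: "((((21/4)) + ((-59/8)+(1/2)*qq)*t1 + ((17/8)+(13/8)*qq+(-1/2)*qq^2)*t1^2)::real) = ((((1+qq) + ((-1)+(-1)*qq)*t1)::real)) - (qq - 17/4)*((((1) + ((-3/2))*t1 + ((1/2)+(1/2)*qq)*t1^2)::real))" by (simp add: field_simps power2_eq_square power3_eq_cube)
  have q5: "((((-9/4)+qq) + ((31/8)+(-1)*qq)*t1 + ((-13/8)+(-13/8)*qq)*t1^2)::real) = ((((1+qq) + ((-1)+(-1)*qq)*t1)::real)) - 13/4*((((1) + ((-3/2))*t1 + ((1/2)+(1/2)*qq)*t1^2)::real))" by (simp add: field_simps power2_eq_square power3_eq_cube)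
  have c1: "(((1) + ((-2))*t1 + (1+qq)*t1^2)::real) \<le> 1 * exp(2*t1)" by (rule nd3[OF assms(1)])
  have c2: "(((1) + ((-3/2))*t1 + ((1/2)+(1/2)*qq)*t1^2)::real) \<le> 1 * exp(2*t1)" by (rule nd17[OF assms(1)])
  have c3: "- ((((1) + ((-3/2))*t1 + ((1/2)+(1/2)*qq)*t1^2)::real)) \<le> 1 * exp(2*t1)" using q3 nd22[OF assms(1)] by metis
  have c4: "((((1+qq) + ((-1)+(-1)*qq)*t1)::real)) - (qq - 17/4)*((((1) + ((-3/2))*t1 + ((1/2)+(1/2)*qq)*t1^2)::real)) \<le> (21/4) * exp(2*t1)" using q4 nd25[OF assms(1)] by metis
  have c5: "((((1+qq) + ((-1)+(-1)*qq)*t1)::real)) - 13/4*((((1) + ((-3/2))*t1 + ((1/2)+(1/2)*qq)*t1^2)::real)) \<le> (21/4) * exp(2*t1)" using q5 nd28[OF assms(1)] by metis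
  have kk: "((21/4) * exp(2*t1)::real) = 21/4 * (1 * exp(2*t1))" by simp
  show ?thesis unfolding e by (rule QLK[OF assms(2) c1 c2 c3 c4 c5 kk])
qed

lemma nd32: "((-1139/64)+(25/8)*qq+(1/4)*qq^2::real) \<le> (441/16)"
  using qq_bounds by linarith

lemma nd33: "((631/64)+(-39/16)*qq+(1/2)*qq^2::real) \<le> (441/16)"
  using qq_bounds by linarith

lemma nd31:
  assumes "0 \<le> t1"
  shows "((((-21/4)) + ((59/8)+(-1/2)*qq)*t1 + ((-17/8)+(-13/8)*qq+(1/2)*qq^2)*t1^2)::real) \<le> (21/4) * exp(2*t1)"
proof -
  have e: "((((-21/4)) + ((59/8)+(-1/2)*qq)*t1 + ((-17/8)+(-13/8)*qq+(1/2)*qq^2)*t1^2)::real) = ((((-21/4)))::real) - 2*(((((-59/16)+(1/4)*qq))::real))*t1 + (((((-17/8)+(-13/8)*qq+(1/2)*qq^2))::real))*t1^2" by (simp add: field_simps power2_eq_square power3_eq_cube)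
  have q3: "((((59/16)+(-1/4)*qq))::real) = - (((((-59/16)+(1/4)*qq))::real))" by (simp add: field_simps power2_eq_square power3_eq_cube)
  have q4: "((((-1139/64)+(25/8)*qq+(1/4)*qq^2))::real) = (((((-17/8)+(-13/8)*qq+(1/2)*qq^2))::real)) - (qq - 17/4)*(((((-59/16)+(1/4)*qq))::real))" by (simp add: field_simps power2_eq_square power3_eq_cube)
  have q5: "((((631/64)+(-39/16)*qq+(1/2)*qq^2))::real) = (((((-17/8)+(-13/8)*qq+(1/2)*qq^2))::real)) - 13/4*(((((-59/16)+(1/4)*qq))::real))" by (simp add: field_simps power2_eq_square power3_eq_cube)
  have c1: "((((-21/4)))::real) \<le> (21/4)" by (rule nd9)
  have c2: "((((-59/16)+(1/4)*qq))::real) \<le> (21/4)" by (rule nd23)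
  have c3: "- (((((-59/16)+(1/4)*qq))::real)) \<le> (21/4)" using q3 nd20 by metis
  have c4: "(((((-17/8)+(-13/8)*qq+(1/2)*qq^2))::real)) - (qq - 17/4)*(((((-59/16)+(1/4)*qq))::real)) \<le> (441/16)" using q4 nd32 by metis
  have c5: "(((((-17/8)+(-13/8)*qq+(1/2)*qq^2))::real)) - 13/4*(((((-59/16)+(1/4)*qq))::real)) \<le> (441/16)" using q5 nd33 by metis
  have kk: "((441/16)::real) = 21/4 * ((21/4))" by simp
  show ?thesis unfolding e by (rule QLK[OF assms(1) c1 c2 c3 c4 c5 kk])
qed

lemma nd35: "((-299/64)+(13/4)*qq::real) \<le> (441/16)"
  using qq_bounds by linarith

lemma nd34:
  assumes "0 \<le> t1"
  shows "((((9/4)+(-1)*qq) + ((-31/8)+qq)*t1 + ((13/8)+(13/8)*qq)*t1^2)::real) \<le> (21/4) * exp(2*t1)"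
proof -
  have e: "((((9/4)+(-1)*qq) + ((-31/8)+qq)*t1 + ((13/8)+(13/8)*qq)*t1^2)::real) = ((((9/4)+(-1)*qq))::real) - 2*(((((31/16)+(-1/2)*qq))::real))*t1 + (((((13/8)+(13/8)*qq))::real))*t1^2" by (simp add: field_simps power2_eq_square power3_eq_cube)
  have q3: "((((-31/16)+(1/2)*qq))::real) = - (((((31/16)+(-1/2)*qq))::real))" by (simp add: field_simps power2_eq_square power3_eq_cube)
  have q4: "((((631/64)+(-39/16)*qq+(1/2)*qq^2))::real) = (((((13/8)+(13/8)*qq))::real)) - (qq - 17/4)*(((((31/16)+(-1/2)*qq))::real))" by (simp add: field_simps power2_eq_square power3_eq_cube)
  have q5: "((((-299/64)+(13/4)*qq))::real) = (((((13/8)+(13/8)*qq))::real)) - 13/4*(((((31/16)+(-1/2)*qq))::real))" by (simp add: field_simps power2_eq_square power3_eq_cube)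
  have c1: "((((9/4)+(-1)*qq))::real) \<le> (21/4)" by (rule nd10)
  have c2: "((((31/16)+(-1/2)*qq))::real) \<le> (21/4)" by (rule nd24)
  have c3: "- (((((31/16)+(-1/2)*qq))::real)) \<le> (21/4)" using q3 nd21 by metis
  have c4: "(((((13/8)+(13/8)*qq))::real)) - (qq - 17/4)*(((((31/16)+(-1/2)*qq))::real)) \<le> (441/16)" using q4 nd33 by metis
  have c5: "(((((13/8)+(13/8)*qq))::real)) - 13/4*(((((31/16)+(-1/2)*qq))::real)) \<le> (441/16)" using q5 nd35 by metis
  have kk: "((441/16)::real) = 21/4 * ((21/4))" by simp
  show ?thesis unfolding e by (rule QLK[OF assms(1) c1 c2 c3 c4 c5 kk])
qed

lemma nd30:
  assumes "0 \<le> t1" "0 \<le> t2"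
  shows "((((-1)) + (2)*t2 + ((-1)+(-1)*qq)*t2^2 + (2)*t1 + ((-3))*t1*t2 + (1+qq)*t1*t2^2 + ((-1)+(-1)*qq)*t1^2 + (1+qq)*t1^2*t2)::real) \<le> 1 * exp(2*t1) * exp(2*t2)"
proof -
  have e: "((((-1)) + (2)*t2 + ((-1)+(-1)*qq)*t2^2 + (2)*t1 + ((-3))*t1*t2 + (1+qq)*t1*t2^2 + ((-1)+(-1)*qq)*t1^2 + (1+qq)*t1^2*t2)::real) = ((((-1)) + (2)*t1 + ((-1)+(-1)*qq)*t1^2)::real) - 2*(((((-1)) + ((3/2))*t1 + ((-1/2)+(-1/2)*qq)*t1^2)::real))*t2 + (((((-1)+(-1)*qq) + (1+qq)*t1)::real))*t2^2" by (simp add: field_simps power2_eq_square power3_eq_cube)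
  have q3: "(((1) + ((-3/2))*t1 + ((1/2)+(1/2)*qq)*t1^2)::real) = - (((((-1)) + ((3/2))*t1 + ((-1/2)+(-1/2)*qq)*t1^2)::real))" by (simp add: field_simps power2_eq_square power3_eq_cube)
  have q4: "((((-21/4)) + ((59/8)+(-1/2)*qq)*t1 + ((-17/8)+(-13/8)*qq+(1/2)*qq^2)*t1^2)::real) = (((((-1)+(-1)*qq) + (1+qq)*t1)::real)) - (qq - 17/4)*(((((-1)) + ((3/2))*t1 + ((-1/2)+(-1/2)*qq)*t1^2)::real))" by (simp add: field_simps power2_eq_square power3_eq_cube)
  have q5: "((((9/4)+(-1)*qq) + ((-31/8)+qq)*t1 + ((13/8)+(13/8)*qq)*t1^2)::real) = (((((-1)+(-1)*qq) + (1+qq)*t1)::real)) - 13/4*(((((-1)) + ((3/2))*t1 + ((-1/2)+(-1/2)*qq)*t1^2)::real))" by (simp add: field_simps power2_eq_square power3_eq_cube)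
  have c1: "((((-1)) + (2)*t1 + ((-1)+(-1)*qq)*t1^2)::real) \<le> 1 * exp(2*t1)" by (rule nd8[OF assms(1)])
  have c2: "((((-1)) + ((3/2))*t1 + ((-1/2)+(-1/2)*qq)*t1^2)::real) \<le> 1 * exp(2*t1)" by (rule nd22[OF assms(1)])
  have c3: "- (((((-1)) + ((3/2))*t1 + ((-1/2)+(-1/2)*qq)*t1^2)::real)) \<le> 1 * exp(2*t1)" using q3 nd17[OF assms(1)] by metis
  have c4: "(((((-1)+(-1)*qq) + (1+qq)*t1)::real)) - (qq - 17/4)*(((((-1)) + ((3/2))*t1 + ((-1/2)+(-1/2)*qq)*t1^2)::real)) \<le> (21/4) * exp(2*t1)" using q4 nd31[OF assms(1)] by metis
  have c5: "(((((-1)+(-1)*qq) + (1+qq)*t1)::real)) - 13/4*(((((-1)) + ((3/2))*t1 + ((-1/2)+(-1/2)*qq)*t1^2)::real)) \<le> (21/4) * exp(2*t1)" using q5 nd34[OF assms(1)] by metis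
  have kk: "((21/4) * exp(2*t1)::real) = 21/4 * (1 * exp(2*t1))" by simp
  show ?thesis unfolding e by (rule QLK[OF assms(2) c1 c2 c3 c4 c5 kk])
qed

lemma nd38: "((21675/256)+(-1683/64)*qq+(-27/16)*qq^2+(3/4)*qq^3::real) \<le> (9261/64)"
  using qq_bounds by linarith

lemma nd39: "((-12495/256)+(239/16)*qq+(-47/16)*qq^2+(1/2)*qq^3::real) \<le> (9261/64)"
  using qq_bounds by linarith

lemma nd37:
  assumes "0 \<le> t1"
  shows "((((441/16)) + ((-1139/32)+(25/4)*qq+(1/2)*qq^2)*t1 + ((289/32)+(153/32)*qq+(-15/4)*qq^2+(1/2)*qq^3)*t1^2)::real) \<le> (441/16) * exp(2*t1)"
proof -
  have e: "((((441/16)) + ((-1139/32)+(25/4)*qq+(1/2)*qq^2)*t1 + ((289/32)+(153/32)*qq+(-15/4)*qq^2+(1/2)*qq^3)*t1^2)::real) = ((((441/16)))::real) - 2*(((((1139/64)+(-25/8)*qq+(-1/4)*qq^2))::real))*t1 + (((((289/32)+(153/32)*qq+(-15/4)*qq^2+(1/2)*qq^3))::real))*t1^2" by (simp add: field_simps power2_eq_square power3_eq_cube)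
  have q3: "((((-1139/64)+(25/8)*qq+(1/4)*qq^2))::real) = - (((((1139/64)+(-25/8)*qq+(-1/4)*qq^2))::real))" by (simp add: field_simps power2_eq_square power3_eq_cube)
  have q4: "((((21675/256)+(-1683/64)*qq+(-27/16)*qq^2+(3/4)*qq^3))::real) = (((((289/32)+(153/32)*qq+(-15/4)*qq^2+(1/2)*qq^3))::real)) - (qq - 17/4)*(((((1139/64)+(-25/8)*qq+(-1/4)*qq^2))::real))" by (simp add: field_simps power2_eq_square power3_eq_cube)
  have q5: "((((-12495/256)+(239/16)*qq+(-47/16)*qq^2+(1/2)*qq^3))::real) = (((((289/32)+(153/32)*qq+(-15/4)*qq^2+(1/2)*qq^3))::real)) - 13/4*(((((1139/64)+(-25/8)*qq+(-1/4)*qq^2))::real))" by (simp add: field_simps power2_eq_square power3_eq_cube)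
  have c1: "((((441/16)))::real) \<le> (441/16)" by (rule nd12)
  have c2: "((((1139/64)+(-25/8)*qq+(-1/4)*qq^2))::real) \<le> (441/16)" by (rule nd26)
  have c3: "- (((((1139/64)+(-25/8)*qq+(-1/4)*qq^2))::real)) \<le> (441/16)" using q3 nd32 by metis
  have c4: "(((((289/32)+(153/32)*qq+(-15/4)*qq^2+(1/2)*qq^3))::real)) - (qq - 17/4)*(((((1139/64)+(-25/8)*qq+(-1/4)*qq^2))::real)) \<le> (9261/64)" using q4 nd38 by metis
  have c5: "(((((289/32)+(153/32)*qq+(-15/4)*qq^2+(1/2)*qq^3))::real)) - 13/4*(((((1139/64)+(-25/8)*qq+(-1/4)*qq^2))::real)) \<le> (9261/64)" using q5 nd39 by metis
  have kk: "((9261/64)::real) = 21/4 * ((441/16))" by simp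
  show ?thesis unfolding e by (rule QLK[OF assms(1) c1 c2 c3 c4 c5 kk])
qed

lemma nd41: "((6435/256)+(-845/64)*qq+(13/4)*qq^2::real) \<le> (9261/64)"
  using qq_bounds by linarith

lemma nd40:
  assumes "0 \<le> t1"
  shows "((((-189/16)+(21/4)*qq) + ((631/32)+(-39/8)*qq+qq^2)*t1 + ((-221/32)+(-169/32)*qq+(13/8)*qq^2)*t1^2)::real) \<le> (441/16) * exp(2*t1)"
proof -
  have e: "((((-189/16)+(21/4)*qq) + ((631/32)+(-39/8)*qq+qq^2)*t1 + ((-221/32)+(-169/32)*qq+(13/8)*qq^2)*t1^2)::real) = ((((-189/16)+(21/4)*qq))::real) - 2*(((((-631/64)+(39/16)*qq+(-1/2)*qq^2))::real))*t1 + (((((-221/32)+(-169/32)*qq+(13/8)*qq^2))::real))*t1^2" by (simp add: field_simps power2_eq_square power3_eq_cube)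
  have q3: "((((631/64)+(-39/16)*qq+(1/2)*qq^2))::real) = - (((((-631/64)+(39/16)*qq+(-1/2)*qq^2))::real))" by (simp add: field_simps power2_eq_square power3_eq_cube)
  have q4: "((((-12495/256)+(239/16)*qq+(-47/16)*qq^2+(1/2)*qq^3))::real) = (((((-221/32)+(-169/32)*qq+(13/8)*qq^2))::real)) - (qq - 17/4)*(((((-631/64)+(39/16)*qq+(-1/2)*qq^2))::real))" by (simp add: field_simps power2_eq_square power3_eq_cube)
  have q5: "((((6435/256)+(-845/64)*qq+(13/4)*qq^2))::real) = (((((-221/32)+(-169/32)*qq+(13/8)*qq^2))::real)) - 13/4*(((((-631/64)+(39/16)*qq+(-1/2)*qq^2))::real))" by (simp add: field_simps power2_eq_square power3_eq_cube)
  have c1: "((((-189/16)+(21/4)*qq))::real) \<le> (441/16)" by (rule nd13)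
  have c2: "((((-631/64)+(39/16)*qq+(-1/2)*qq^2))::real) \<le> (441/16)" by (rule nd27)
  have c3: "- (((((-631/64)+(39/16)*qq+(-1/2)*qq^2))::real)) \<le> (441/16)" using q3 nd33 by metis
  have c4: "(((((-221/32)+(-169/32)*qq+(13/8)*qq^2))::real)) - (qq - 17/4)*(((((-631/64)+(39/16)*qq+(-1/2)*qq^2))::real)) \<le> (9261/64)" using q4 nd39 by metis
  have c5: "(((((-221/32)+(-169/32)*qq+(13/8)*qq^2))::real)) - 13/4*(((((-631/64)+(39/16)*qq+(-1/2)*qq^2))::real)) \<le> (9261/64)" using q5 nd41 by metis
  have kk: "((9261/64)::real) = 21/4 * ((441/16))" by simp
  show ?thesis unfolding e by (rule QLK[OF assms(1) c1 c2 c3 c4 c5 kk])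
qed

lemma nd36:
  assumes "0 \<le> t1" "0 \<le> t2"
  shows "((((21/4)) + ((-21/2))*t2 + ((21/4)+(21/4)*qq)*t2^2 + ((-21/2))*t1 + ((59/4)+(-1)*qq)*t1*t2 + ((-17/4)+(-13/4)*qq+qq^2)*t1*t2^2 + ((21/4)+(21/4)*qq)*t1^2 + ((-17/4)+(-13/4)*qq+qq^2)*t1^2*t2)::real) \<le> (21/4) * exp(2*t1) * exp(2*t2)"
proof -
  have e: "((((21/4)) + ((-21/2))*t2 + ((21/4)+(21/4)*qq)*t2^2 + ((-21/2))*t1 + ((59/4)+(-1)*qq)*t1*t2 + ((-17/4)+(-13/4)*qq+qq^2)*t1*t2^2 + ((21/4)+(21/4)*qq)*t1^2 + ((-17/4)+(-13/4)*qq+qq^2)*t1^2*t2)::real) = ((((21/4)) + ((-21/2))*t1 + ((21/4)+(21/4)*qq)*t1^2)::real) - 2*(((((21/4)) + ((-59/8)+(1/2)*qq)*t1 + ((17/8)+(13/8)*qq+(-1/2)*qq^2)*t1^2)::real))*t2 + (((((21/4)+(21/4)*qq) + ((-17/4)+(-13/4)*qq+qq^2)*t1)::real))*t2^2" by (simp add: field_simps power2_eq_square power3_eq_cube)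
  have q3: "((((-21/4)) + ((59/8)+(-1/2)*qq)*t1 + ((-17/8)+(-13/8)*qq+(1/2)*qq^2)*t1^2)::real) = - (((((21/4)) + ((-59/8)+(1/2)*qq)*t1 + ((17/8)+(13/8)*qq+(-1/2)*qq^2)*t1^2)::real))" by (simp add: field_simps power2_eq_square power3_eq_cube)
  have q4: "((((441/16)) + ((-1139/32)+(25/4)*qq+(1/2)*qq^2)*t1 + ((289/32)+(153/32)*qq+(-15/4)*qq^2+(1/2)*qq^3)*t1^2)::real) = (((((21/4)+(21/4)*qq) + ((-17/4)+(-13/4)*qq+qq^2)*t1)::real)) - (qq - 17/4)*(((((21/4)) + ((-59/8)+(1/2)*qq)*t1 + ((17/8)+(13/8)*qq+(-1/2)*qq^2)*t1^2)::real))" by (simp add: field_simps power2_eq_square power3_eq_cube)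
  have q5: "((((-189/16)+(21/4)*qq) + ((631/32)+(-39/8)*qq+qq^2)*t1 + ((-221/32)+(-169/32)*qq+(13/8)*qq^2)*t1^2)::real) = (((((21/4)+(21/4)*qq) + ((-17/4)+(-13/4)*qq+qq^2)*t1)::real)) - 13/4*(((((21/4)) + ((-59/8)+(1/2)*qq)*t1 + ((17/8)+(13/8)*qq+(-1/2)*qq^2)*t1^2)::real))" by (simp add: field_simps power2_eq_square power3_eq_cube)
  have c1: "((((21/4)) + ((-21/2))*t1 + ((21/4)+(21/4)*qq)*t1^2)::real) \<le> (21/4) * exp(2*t1)" by (rule nd11[OF assms(1)])
  have c2: "((((21/4)) + ((-59/8)+(1/2)*qq)*t1 + ((17/8)+(13/8)*qq+(-1/2)*qq^2)*t1^2)::real) \<le> (21/4) * exp(2*t1)" by (rule nd25[OF assms(1)])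
  have c3: "- (((((21/4)) + ((-59/8)+(1/2)*qq)*t1 + ((17/8)+(13/8)*qq+(-1/2)*qq^2)*t1^2)::real)) \<le> (21/4) * exp(2*t1)" using q3 nd31[OF assms(1)] by metis
  have c4: "(((((21/4)+(21/4)*qq) + ((-17/4)+(-13/4)*qq+qq^2)*t1)::real)) - (qq - 17/4)*(((((21/4)) + ((-59/8)+(1/2)*qq)*t1 + ((17/8)+(13/8)*qq+(-1/2)*qq^2)*t1^2)::real)) \<le> (441/16) * exp(2*t1)" using q4 nd37[OF assms(1)] by metis
  have c5: "(((((21/4)+(21/4)*qq) + ((-17/4)+(-13/4)*qq+qq^2)*t1)::real)) - 13/4*(((((21/4)) + ((-59/8)+(1/2)*qq)*t1 + ((17/8)+(13/8)*qq+(-1/2)*qq^2)*t1^2)::real)) \<le> (441/16) * exp(2*t1)" using q5 nd40[OF assms(1)] by metis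
  have kk: "((441/16) * exp(2*t1)::real) = 21/4 * ((21/4) * exp(2*t1))" by simp
  show ?thesis unfolding e by (rule QLK[OF assms(2) c1 c2 c3 c4 c5 kk])
qed

lemma nd44: "((-2535/256)+(507/32)*qq::real) \<le> (9261/64)"
  using qq_bounds by linarith

lemma nd43:
  assumes "0 \<le> t1"
  shows "((((81/16)+(-9/2)*qq+qq^2) + ((-299/32)+(13/2)*qq)*t1 + ((169/32)+(169/32)*qq)*t1^2)::real) \<le> (441/16) * exp(2*t1)"
proof -
  have e: "((((81/16)+(-9/2)*qq+qq^2) + ((-299/32)+(13/2)*qq)*t1 + ((169/32)+(169/32)*qq)*t1^2)::real) = ((((81/16)+(-9/2)*qq+qq^2))::real) - 2*(((((299/64)+(-13/4)*qq))::real))*t1 + (((((169/32)+(169/32)*qq))::real))*t1^2" by (simp add: field_simps power2_eq_square power3_eq_cube)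
  have q3: "((((-299/64)+(13/4)*qq))::real) = - (((((299/64)+(-13/4)*qq))::real))" by (simp add: field_simps power2_eq_square power3_eq_cube)
  have q4: "((((6435/256)+(-845/64)*qq+(13/4)*qq^2))::real) = (((((169/32)+(169/32)*qq))::real)) - (qq - 17/4)*(((((299/64)+(-13/4)*qq))::real))" by (simp add: field_simps power2_eq_square power3_eq_cube)
  have q5: "((((-2535/256)+(507/32)*qq))::real) = (((((169/32)+(169/32)*qq))::real)) - 13/4*(((((299/64)+(-13/4)*qq))::real))" by (simp add: field_simps power2_eq_square power3_eq_cube)
  have c1: "((((81/16)+(-9/2)*qq+qq^2))::real) \<le> (441/16)" by (rule nd15)
  have c2: "((((299/64)+(-13/4)*qq))::real) \<le> (441/16)" by (rule nd29)
  have c3: "- (((((299/64)+(-13/4)*qq))::real)) \<le> (441/16)" using q3 nd35 by metis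
  have c4: "(((((169/32)+(169/32)*qq))::real)) - (qq - 17/4)*(((((299/64)+(-13/4)*qq))::real)) \<le> (9261/64)" using q4 nd41 by metis
  have c5: "(((((169/32)+(169/32)*qq))::real)) - 13/4*(((((299/64)+(-13/4)*qq))::real)) \<le> (9261/64)" using q5 nd44 by metis
  have kk: "((9261/64)::real) = 21/4 * ((441/16))" by simp
  show ?thesis unfolding e by (rule QLK[OF assms(1) c1 c2 c3 c4 c5 kk])
qed

lemma nd42:
  assumes "0 \<le> t1" "0 \<le> t2"
  shows "((((-9/4)+qq) + ((9/2)+(-2)*qq)*t2 + ((-9/4)+(-5/4)*qq+qq^2)*t2^2 + ((9/2)+(-2)*qq)*t1 + ((-31/4)+2*qq)*t1*t2 + ((13/4)+(13/4)*qq)*t1*t2^2 + ((-9/4)+(-5/4)*qq+qq^2)*t1^2 + ((13/4)+(13/4)*qq)*t1^2*t2)::real) \<le> (21/4) * exp(2*t1) * exp(2*t2)"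
proof -
  have e: "((((-9/4)+qq) + ((9/2)+(-2)*qq)*t2 + ((-9/4)+(-5/4)*qq+qq^2)*t2^2 + ((9/2)+(-2)*qq)*t1 + ((-31/4)+2*qq)*t1*t2 + ((13/4)+(13/4)*qq)*t1*t2^2 + ((-9/4)+(-5/4)*qq+qq^2)*t1^2 + ((13/4)+(13/4)*qq)*t1^2*t2)::real) = ((((-9/4)+qq) + ((9/2)+(-2)*qq)*t1 + ((-9/4)+(-5/4)*qq+qq^2)*t1^2)::real) - 2*(((((-9/4)+qq) + ((31/8)+(-1)*qq)*t1 + ((-13/8)+(-13/8)*qq)*t1^2)::real))*t2 + (((((-9/4)+(-5/4)*qq+qq^2) + ((13/4)+(13/4)*qq)*t1)::real))*t2^2" by (simp add: field_simps power2_eq_square power3_eq_cube)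
  have q3: "((((9/4)+(-1)*qq) + ((-31/8)+qq)*t1 + ((13/8)+(13/8)*qq)*t1^2)::real) = - (((((-9/4)+qq) + ((31/8)+(-1)*qq)*t1 + ((-13/8)+(-13/8)*qq)*t1^2)::real))" by (simp add: field_simps power2_eq_square power3_eq_cube)
  have q4: "((((-189/16)+(21/4)*qq) + ((631/32)+(-39/8)*qq+qq^2)*t1 + ((-221/32)+(-169/32)*qq+(13/8)*qq^2)*t1^2)::real) = (((((-9/4)+(-5/4)*qq+qq^2) + ((13/4)+(13/4)*qq)*t1)::real)) - (qq - 17/4)*(((((-9/4)+qq) + ((31/8)+(-1)*qq)*t1 + ((-13/8)+(-13/8)*qq)*t1^2)::real))" by (simp add: field_simps power2_eq_square power3_eq_cube)
  have q5: "((((81/16)+(-9/2)*qq+qq^2) + ((-299/32)+(13/2)*qq)*t1 + ((169/32)+(169/32)*qq)*t1^2)::real) = (((((-9/4)+(-5/4)*qq+qq^2) + ((13/4)+(13/4)*qq)*t1)::real)) - 13/4*(((((-9/4)+qq) + ((31/8)+(-1)*qq)*t1 + ((-13/8)+(-13/8)*qq)*t1^2)::real))" by (simp add: field_simps power2_eq_square power3_eq_cube)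
  have c1: "((((-9/4)+qq) + ((9/2)+(-2)*qq)*t1 + ((-9/4)+(-5/4)*qq+qq^2)*t1^2)::real) \<le> (21/4) * exp(2*t1)" by (rule nd14[OF assms(1)])
  have c2: "((((-9/4)+qq) + ((31/8)+(-1)*qq)*t1 + ((-13/8)+(-13/8)*qq)*t1^2)::real) \<le> (21/4) * exp(2*t1)" by (rule nd28[OF assms(1)])
  have c3: "- (((((-9/4)+qq) + ((31/8)+(-1)*qq)*t1 + ((-13/8)+(-13/8)*qq)*t1^2)::real)) \<le> (21/4) * exp(2*t1)" using q3 nd34[OF assms(1)] by metis
  have c4: "(((((-9/4)+(-5/4)*qq+qq^2) + ((13/4)+(13/4)*qq)*t1)::real)) - (qq - 17/4)*(((((-9/4)+qq) + ((31/8)+(-1)*qq)*t1 + ((-13/8)+(-13/8)*qq)*t1^2)::real)) \<le> (441/16) * exp(2*t1)" using q4 nd40[OF assms(1)] by metis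
  have c5: "(((((-9/4)+(-5/4)*qq+qq^2) + ((13/4)+(13/4)*qq)*t1)::real)) - 13/4*(((((-9/4)+qq) + ((31/8)+(-1)*qq)*t1 + ((-13/8)+(-13/8)*qq)*t1^2)::real)) \<le> (441/16) * exp(2*t1)" using q5 nd43[OF assms(1)] by metis
  have kk: "((441/16) * exp(2*t1)::real) = 21/4 * ((21/4) * exp(2*t1))" by simp
  show ?thesis unfolding e by (rule QLK[OF assms(2) c1 c2 c3 c4 c5 kk])
qed

lemma nd1:
  assumes "0 \<le> t1" "0 \<le> t2" "0 \<le> t3"
  shows "(((1) + ((-2))*t3 + (1+qq)*t3^2 + ((-2))*t2 + (4)*t2*t3 + ((-2)+(-2)*qq)*t2*t3^2 + (1+qq)*t2^2 + ((-2)+(-2)*qq)*t2^2*t3 + (1+2*qq+qq^2)*t2^2*t3^2 + ((-2))*t1 + (4)*t1*t3 + ((-2)+(-2)*qq)*t1*t3^2 + (4)*t1*t2 + ((-6))*t1*t2*t3 + (2+2*qq)*t1*t2*t3^2 + ((-2)+(-2)*qq)*t1*t2^2 + (2+2*qq)*t1*t2^2*t3 + (1+qq)*t1^2 + ((-2)+(-2)*qq)*t1^2*t3 + (1+2*qq+qq^2)*t1^2*t3^2 + ((-2)+(-2)*qq)*t1^2*t2 + (2+2*qq)*t1^2*t2*t3 + (1+2*qq+qq^2)*t1^2*t2^2)::real) \<le> 1 * exp(2*t1) * exp(2*t2) * exp(2*t3)"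
proof -
  have e: "(((1) + ((-2))*t3 + (1+qq)*t3^2 + ((-2))*t2 + (4)*t2*t3 + ((-2)+(-2)*qq)*t2*t3^2 + (1+qq)*t2^2 + ((-2)+(-2)*qq)*t2^2*t3 + (1+2*qq+qq^2)*t2^2*t3^2 + ((-2))*t1 + (4)*t1*t3 + ((-2)+(-2)*qq)*t1*t3^2 + (4)*t1*t2 + ((-6))*t1*t2*t3 + (2+2*qq)*t1*t2*t3^2 + ((-2)+(-2)*qq)*t1*t2^2 + (2+2*qq)*t1*t2^2*t3 + (1+qq)*t1^2 + ((-2)+(-2)*qq)*t1^2*t3 + (1+2*qq+qq^2)*t1^2*t3^2 + ((-2)+(-2)*qq)*t1^2*t2 + (2+2*qq)*t1^2*t2*t3 + (1+2*qq+qq^2)*t1^2*t2^2)::real) = (((1) + ((-2))*t2 + (1+qq)*t2^2 + ((-2))*t1 + (4)*t1*t2 + ((-2)+(-2)*qq)*t1*t2^2 + (1+qq)*t1^2 + ((-2)+(-2)*qq)*t1^2*t2 + (1+2*qq+qq^2)*t1^2*t2^2)::real) - 2*((((1) + ((-2))*t2 + (1+qq)*t2^2 + ((-2))*t1 + (3)*t1*t2 + ((-1)+(-1)*qq)*t1*t2^2 + (1+qq)*t1^2 + ((-1)+(-1)*qq)*t1^2*t2)::real))*t3 + ((((1+qq) + ((-2)+(-2)*qq)*t2 + (1+2*qq+qq^2)*t2^2 + ((-2)+(-2)*qq)*t1 + (2+2*qq)*t1*t2 + (1+2*qq+qq^2)*t1^2)::real))*t3^2" by (simp add: field_simps power2_eq_square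 power3_eq_cube)
  have q3: "((((-1)) + (2)*t2 + ((-1)+(-1)*qq)*t2^2 + (2)*t1 + ((-3))*t1*t2 + (1+qq)*t1*t2^2 + ((-1)+(-1)*qq)*t1^2 + (1+qq)*t1^2*t2)::real) = - ((((1) + ((-2))*t2 + (1+qq)*t2^2 + ((-2))*t1 + (3)*t1*t2 + ((-1)+(-1)*qq)*t1*t2^2 + (1+qq)*t1^2 + ((-1)+(-1)*qq)*t1^2*t2)::real))" by (simp add: field_simps power2_eq_square power3_eq_cube)
  have q4: "((((21/4)) + ((-21/2))*t2 + ((21/4)+(21/4)*qq)*t2^2 + ((-21/2))*t1 + ((59/4)+(-1)*qq)*t1*t2 + ((-17/4)+(-13/4)*qq+qq^2)*t1*t2^2 + ((21/4)+(21/4)*qq)*t1^2 + ((-17/4)+(-13/4)*qq+qq^2)*t1^2*t2)::real) = ((((1+qq) + ((-2)+(-2)*qq)*t2 + (1+2*qq+qq^2)*t2^2 + ((-2)+(-2)*qq)*t1 + (2+2*qq)*t1*t2 + (1+2*qq+qq^2)*t1^2)::real)) - (qq - 17/4)*((((1) + ((-2))*t2 + (1+qq)*t2^2 + ((-2))*t1 + (3)*t1*t2 + ((-1)+(-1)*qq)*t1*t2^2 + (1+qq)*t1^2 + ((-1)+(-1)*qq)*t1^2*t2)::real))" by (simp add: field_simps power2_eq_square power3_eq_cube)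
  have q5: "((((-9/4)+qq) + ((9/2)+(-2)*qq)*t2 + ((-9/4)+(-5/4)*qq+qq^2)*t2^2 + ((9/2)+(-2)*qq)*t1 + ((-31/4)+2*qq)*t1*t2 + ((13/4)+(13/4)*qq)*t1*t2^2 + ((-9/4)+(-5/4)*qq+qq^2)*t1^2 + ((13/4)+(13/4)*qq)*t1^2*t2)::real) = ((((1+qq) + ((-2)+(-2)*qq)*t2 + (1+2*qq+qq^2)*t2^2 + ((-2)+(-2)*qq)*t1 + (2+2*qq)*t1*t2 + (1+2*qq+qq^2)*t1^2)::real)) - 13/4*((((1) + ((-2))*t2 + (1+qq)*t2^2 + ((-2))*t1 + (3)*t1*t2 + ((-1)+(-1)*qq)*t1*t2^2 + (1+qq)*t1^2 + ((-1)+(-1)*qq)*t1^2*t2)::real))" by (simp add: field_simps power2_eq_square power3_eq_cube)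
  have c1: "(((1) + ((-2))*t2 + (1+qq)*t2^2 + ((-2))*t1 + (4)*t1*t2 + ((-2)+(-2)*qq)*t1*t2^2 + (1+qq)*t1^2 + ((-2)+(-2)*qq)*t1^2*t2 + (1+2*qq+qq^2)*t1^2*t2^2)::real) \<le> 1 * exp(2*t1) * exp(2*t2)" by (rule nd2[OF assms(1) assms(2)])
  have c2: "(((1) + ((-2))*t2 + (1+qq)*t2^2 + ((-2))*t1 + (3)*t1*t2 + ((-1)+(-1)*qq)*t1*t2^2 + (1+qq)*t1^2 + ((-1)+(-1)*qq)*t1^2*t2)::real) \<le> 1 * exp(2*t1) * exp(2*t2)" by (rule nd16[OF assms(1) assms(2)])
  have c3: "- ((((1) + ((-2))*t2 + (1+qq)*t2^2 + ((-2))*t1 + (3)*t1*t2 + ((-1)+(-1)*qq)*t1*t2^2 + (1+qq)*t1^2 + ((-1)+(-1)*qq)*t1^2*t2)::real)) \<le> 1 * exp(2*t1) * exp(2*t2)" using q3 nd30[OF assms(1) assms(2)] by metis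
  have c4: "((((1+qq) + ((-2)+(-2)*qq)*t2 + (1+2*qq+qq^2)*t2^2 + ((-2)+(-2)*qq)*t1 + (2+2*qq)*t1*t2 + (1+2*qq+qq^2)*t1^2)::real)) - (qq - 17/4)*((((1) + ((-2))*t2 + (1+qq)*t2^2 + ((-2))*t1 + (3)*t1*t2 + ((-1)+(-1)*qq)*t1*t2^2 + (1+qq)*t1^2 + ((-1)+(-1)*qq)*t1^2*t2)::real)) \<le> (21/4) * exp(2*t1) * exp(2*t2)" using q4 nd36[OF assms(1) assms(2)] by metis
  have c5: "((((1+qq) + ((-2)+(-2)*qq)*t2 + (1+2*qq+qq^2)*t2^2 + ((-2)+(-2)*qq)*t1 + (2+2*qq)*t1*t2 + (1+2*qq+qq^2)*t1^2)::real)) - 13/4*((((1) + ((-2))*t2 + (1+qq)*t2^2 + ((-2))*t1 + (3)*t1*t2 + ((-1)+(-1)*qq)*t1*t2^2 + (1+qq)*t1^2 + ((-1)+(-1)*qq)*t1^2*t2)::real)) \<le> (21/4) * exp(2*t1) * exp(2*t2)" using q5 nd42[OF assms(1) assms(2)] by metis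
  have kk: "((21/4) * exp(2*t1) * exp(2*t2)::real) = 21/4 * (1 * exp(2*t1) * exp(2*t2))" by simp
  show ?thesis unfolding e by (rule QLK[OF assms(3) c1 c2 c3 c4 c5 kk])
qed


lemma matrix_add_rdistrib': "((B + C) ** A) = (B ** A) + (C ** A)"
  for A :: "real^'k^'m" and B C :: "real^'m^'n"
  by (simp add: vec_eq_iff matrix_matrix_mult_def sum.distrib distrib_right)

definition outer :: "real^'n \<Rightarrow> real^'n^'n" where "outer v = (\<chi> i j. v$i * v$j)"

lemma outer_sandwich: "A ** outer g ** transpose A = outer (A *v g)"
  for A :: "real^'n^'m"
proof -
  have "(\<Sum>l\<in>UNIV. (\<Sum>k\<in>UNIV. A$i$k * (g$k * g$l)) * A$j$l) = (\<Sum>k\<in>UNIV. A$i$k * g$k) * (\<Sum>l\<in>UNIV. A$j$l * g$l)" for i j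
  proof -
    have "(\<Sum>l\<in>UNIV. (\<Sum>k\<in>UNIV. A$i$k * (g$k * g$l)) * A$j$l) = (\<Sum>l\<in>UNIV. \<Sum>k\<in>UNIV. A$i$k * g$k * (A$j$l * g$l))"
      unfolding sum_distrib_right by (simp add: mult_ac)
    also have "\<dots> = (\<Sum>k\<in>UNIV. \<Sum>l\<in>UNIV. A$i$k * g$k * (A$j$l * g$l))" by (rule sum.swap)
    also have "\<dots> = (\<Sum>k\<in>UNIV. A$i$k * g$k) * (\<Sum>l\<in>UNIV. A$j$l * g$l)" by (simp add: sum_product)
    finally show ?thesis .
  qed
  thus ?thesis
    by (simp add: vec_eq_iff outer_def matrix_matrix_mult_def matrix_vector_mult_def transpose_def)
qed

lemma sandwich_sum:
  fixes A :: "real^'n^'m"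
  assumes "finite S"
  shows "A ** (\<Sum>y\<in>S. a y *\<^sub>R outer (g y)) ** transpose A = (\<Sum>y\<in>S. a y *\<^sub>R outer (A *v g y))"
  using assms
proof (induction S rule: finite_induct)
  case empty
  have "A ** (0::real^'n^'n) = 0" "(0::real^'n^'m) ** transpose A = 0"
    by (simp_all add: vec_eq_iff matrix_matrix_mult_def)
  then show ?case by simp
next
  case (insert y S)
  have "A ** (a y *\<^sub>R outer (g y) + (\<Sum>y\<in>S. a y *\<^sub>R outer (g y))) ** transpose A
     = a y *\<^sub>R (A ** outer (g y) ** transpose A) + A ** (\<Sum>y\<in>S. a y *\<^sub>R outer (g y)) ** transpose A"
    by (simp add: matrix_add_ldistrib matrix_add_rdistrib' matrix_scalar_ac scalar_matrix_assoc)
  then show ?case using insert by (simp add: outer_sandwich)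
qed

lemma entry_sum_outer: "(\<Sum>y\<in>S. a y *\<^sub>R outer (v y))$i$j = (\<Sum>y\<in>S. a y * (v y $ i * v y $ j))"
  by (simp add: outer_def)

lemma sym_sum_outer: "transpose (\<Sum>y\<in>S. a y *\<^sub>R outer (v y)) = (\<Sum>y\<in>S. a y *\<^sub>R outer (v y))"
  by (simp add: vec_eq_iff transpose_def outer_def mult.commute)

lemma quadform: "x \<bullet> (M *v x) = (\<Sum>i\<in>UNIV. \<Sum>j\<in>UNIV. x$i * M$i$j * x$j)"
  for M :: "real^'n^'n"
  by (simp add: inner_vec_def matrix_vector_mult_def sum_distrib_left mult_ac)

lemma psd_sum_outer:
  fixes v :: "'b \<Rightarrow> real^'n"
  assumes "\<And>y. y \<in> S \<Longrightarrow> 0 \<le> a y"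
  shows "psd (\<Sum>y\<in>S. a y *\<^sub>R outer (v y))"
  unfolding psd_def
proof
  fix x :: "real^'n"
  have "x \<bullet> ((\<Sum>y\<in>S. a y *\<^sub>R outer (v y)) *v x) = (\<Sum>y\<in>S. a y * (\<Sum>i\<in>UNIV. x$i * v y $ i)^2)"
    unfolding quadform entry_sum_outer
    by (simp add: power2_eq_square sum_product sum_distrib_left sum_distrib_right mult_ac
        sum.swap[of _ S UNIV])
  also have "\<dots> \<ge> 0" using assms by (intro sum_nonneg) auto
  finally show "0 \<le> x \<bullet> ((\<Sum>y\<in>S. a y *\<^sub>R outer (v y)) *v x)" .
qed


lemma sens_poly:
  fixes a b c :: real
  assumes "0 \<le> a" "0 \<le> b" "0 \<le> c"
  shows "(1 - a/2 - b/2 - c/2 + a*b/4 + a*c/4 + b*c/4)^2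
     + qq * ((a/2 - a*b/4 - a*c/4)^2 + (b/2 - a*b/4 - b*c/4)^2 + (c/2 - a*c/4 - b*c/4)^2)
     + qq^2 * ((a*b/4)^2 + (a*c/4)^2 + (b*c/4)^2) \<le> exp (a + b + c)"
proof -
  define t1 where "t1 = a/2"
  define t2 where "t2 = b/2"
  define t3 where "t3 = c/2"
  have "(((1) + ((-2))*t3 + (1+qq)*t3^2 + ((-2))*t2 + (4)*t2*t3 + ((-2)+(-2)*qq)*t2*t3^2 + (1+qq)*t2^2 + ((-2)+(-2)*qq)*t2^2*t3 + (1+2*qq+qq^2)*t2^2*t3^2 + ((-2))*t1 + (4)*t1*t3 + ((-2)+(-2)*qq)*t1*t3^2 + (4)*t1*t2 + ((-6))*t1*t2*t3 + (2+2*qq)*t1*t2*t3^2 + ((-2)+(-2)*qq)*t1*t2^2 + (2+2*qq)*t1*t2^2*t3 + (1+qq)*t1^2 + ((-2)+(-2)*qq)*t1^2*t3 + (1+2*qq+qq^2)*t1^2*t3^2 + ((-2)+(-2)*qq)*t1^2*t2 + (2+2*qq)*t1^2*t2*t3 + (1+2*qq+qq^2)*t1^2*t2^2)::real) \<le> 1 * exp(2*t1) * exp(2*t2) * exp(2*t3)"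
    by (rule nd1) (use assms in \<open>auto simp: t1_def t2_def t3_def\<close>)
  moreover have "1 * exp(2*t1) * exp(2*t2) * exp(2*t3) = exp (a + b + c)"
    by (simp add: t1_def t2_def t3_def flip: exp_add)
  moreover have "(1 - a/2 - b/2 - c/2 + a*b/4 + a*c/4 + b*c/4)^2
     + qq * ((a/2 - a*b/4 - a*c/4)^2 + (b/2 - a*b/4 - b*c/4)^2 + (c/2 - a*c/4 - b*c/4)^2)
     + qq^2 * ((a*b/4)^2 + (a*c/4)^2 + (b*c/4)^2) = (((1) + ((-2))*t3 + (1+qq)*t3^2 + ((-2))*t2 + (4)*t2*t3 + ((-2)+(-2)*qq)*t2*t3^2 + (1+qq)*t2^2 + ((-2)+(-2)*qq)*t2^2*t3 + (1+2*qq+qq^2)*t2^2*t3^2 + ((-2))*t1 + (4)*t1*t3 + ((-2)+(-2)*qq)*t1*t3^2 + (4)*t1*t2 + ((-6))*t1*t2*t3 + (2+2*qq)*t1*t2*t3^2 + ((-2)+(-2)*qq)*t1*t2^2 + (2+2*qq)*t1*t2^2*t3 + (1+qq)*t1^2 + ((-2)+(-2)*qq)*t1^2*t3 + (1+2*qq+qq^2)*t1^2*t3^2 + ((-2)+(-2)*qq)*t1^2*t2 + (2+2*qq)*t1^2*t2*t3 + (1+2*qq+qq^2)*t1^2*t2^2)::real)"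
    by (simp add: t1_def t2_def t3_def field_simps power2_eq_square)
  ultimately show ?thesis by simp
qed


lemma exhaust_7:
  fixes x :: 7
  shows "x = 1 \<or> x = 2 \<or> x = 3 \<or> x = 4 \<or> x = 5 \<or> x = 6 \<or> x = 7"
proof (induct x)
  case (of_int z)
  then have "z = 0 \<or> z = 1 \<or> z = 2 \<or> z = 3 \<or> z = 4 \<or> z = 5 \<or> z = 6" by fastforce
  then show ?case by auto
qed

lemma forall_7: "(\<forall>i::7. P i) \<longleftrightarrow> P 1 \<and> P 2 \<and> P 3 \<and> P 4 \<and> P 5 \<and> P 6 \<and> P 7"
  by (metis exhaust_7)

lemma UNIV_7: "UNIV = {1, 2, 3, 4, 5, 6, 7::7}"
  using exhaust_7 by auto

lemma sum_7: "sum f (UNIV::7 set) = f 1 + f 2 + f 3 + f 4 + f 5 + f 6 + f 7"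
  unfolding UNIV_7 by (simp add: ac_simps)

lemma prod_7: "prod f (UNIV::7 set) = f 1 * f 2 * f 3 * f 4 * f 5 * f 6 * f 7"
  unfolding UNIV_7 by (simp add: ac_simps)

lemma vector_7 [simp]:
 "(vector [x1,x2,x3,x4,x5,x6,x7] ::('a::zero)^7)$1 = x1"
 "(vector [x1,x2,x3,x4,x5,x6,x7] ::('a::zero)^7)$2 = x2"
 "(vector [x1,x2,x3,x4,x5,x6,x7] ::('a::zero)^7)$3 = x3"
 "(vector [x1,x2,x3,x4,x5,x6,x7] ::('a::zero)^7)$4 = x4"
 "(vector [x1,x2,x3,x4,x5,x6,x7] ::('a::zero)^7)$5 = x5"
 "(vector [x1,x2,x3,x4,x5,x6,x7] ::('a::zero)^7)$6 = x6"
 "(vector [x1,x2,x3,x4,x5,x6,x7] ::('a::zero)^7)$7 = x7"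
  unfolding vector_def by simp_all

definition beta0 :: "real^7" where "beta0 = vector [0, -1, -1, -1, 0, 0, 0]"

definition pts :: "7 \<Rightarrow> real^3" where
  "pts i = (if i = 1 then vector [0,0,0] else if i = 2 then vector [2,0,0] else
            if i = 3 then vector [0,2,0] else if i = 4 then vector [0,0,2] else
            if i = 5 then vector [2,2,0] else if i = 6 then vector [2,0,2] else vector [0,2,2])"

definition Kmat :: "real^7^7" where
  "Kmat = vector [vector [1, -1/2, -1/2, -1/2, 1/4, 1/4, 1/4],
                  vector [0, 1/2, 0, 0, -1/4, -1/4, 0],
                  vector [0, 0, 1/2, 0, -1/4, 0, -1/4],
                  vector [0, 0, 0, 1/2, 0, -1/4, -1/4],
                  vector [0, 0, 0, 0, 1/4, 0, 0],
                  vector [0, 0, 0, 0, 0, 1/4, 0],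
                  vector [0, 0, 0, 0, 0, 0, 1/4]]"

lemma lag_comp:
  fixes y :: "real^3"
  defines "a \<equiv> y$1" and "b \<equiv> y$2" and "c \<equiv> y$3"
  shows "(Kmat *v regf y)$1 = 1 - a/2 - b/2 - c/2 + a*b/4 + a*c/4 + b*c/4"
    "(Kmat *v regf y)$2 = a/2 - a*b/4 - a*c/4"
    "(Kmat *v regf y)$3 = b/2 - a*b/4 - b*c/4"
    "(Kmat *v regf y)$4 = c/2 - a*c/4 - b*c/4"
    "(Kmat *v regf y)$5 = a*b/4"
    "(Kmat *v regf y)$6 = a*c/4"
    "(Kmat *v regf y)$7 = b*c/4"
  by (simp_all add: matrix_vector_mult_def sum_7 Kmat_def regf_def a_def b_def c_def field_simps)

lemma intensity_beta0: "intensity beta0 y = exp (- (y$1 + y$2 + y$3))"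
  by (simp add: intensity_def inner_vec_def sum_7 regf_def beta0_def)

lemma pts_vals:
  "pts 1 = vector [0,0,0]" "pts 2 = vector [2,0,0]" "pts 3 = vector [0,2,0]" "pts 4 = vector [0,0,2]"
  "pts 5 = vector [2,2,0]" "pts 6 = vector [2,0,2]" "pts 7 = vector [0,2,2]"
  by (simp_all add: pts_def)

lemma lag_pts: "Kmat *v regf (pts i) = axis i 1"
proof -
  have "\<forall>i j. (Kmat *v regf (pts i))$j = axis i 1 $ j"
    unfolding forall_7 by (simp add: lag_comp pts_vals axis_def)
  thus ?thesis by (simp add: vec_eq_iff)
qed


lemma exp2: "exp (2::real) = qq" and exp4: "exp (4::real) = qq^2"
proof -
  have "exp (2::real) = exp (1 + 1)" by simp
  also have "\<dots> = qq" by (simp only: exp_add qq_def power2_eq_square)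
  finally show "exp (2::real) = qq" .
  have "exp (4::real) = exp (2 + 2)" by simp
  also have "\<dots> = qq^2" by (simp only: exp_add \<open>exp (2::real) = qq\<close> power2_eq_square)
  finally show "exp (4::real) = qq^2" .
qed

lemma lam_pts: "intensity beta0 (pts 1) = 1" "intensity beta0 (pts 2) = exp (-2)"
  "intensity beta0 (pts 3) = exp (-2)" "intensity beta0 (pts 4) = exp (-2)"
  "intensity beta0 (pts 5) = exp (-4)" "intensity beta0 (pts 6) = exp (-4)"
  "intensity beta0 (pts 7) = exp (-4)"
  by (simp_all add: intensity_beta0 pts_vals)

lemma lam_pos: "0 < intensity beta0 x"
  by (simp add: intensity_def)

lemma sensitivity:
  fixes y :: "real^3"
  assumes "\<forall>i. 0 \<le> y$i"
  shows "intensity beta0 y * (\<Sum>j\<in>UNIV. (Kmat *v regf y)$j ^ 2 / intensity beta0 (pts j)) \<le> 1"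
proof -
  define a where "a = y$1"
  define b where "b = y$2"
  define c where "c = y$3"
  have abc: "0 \<le> a" "0 \<le> b" "0 \<le> c" using assms by (auto simp: a_def b_def c_def)
  have d2: "x / exp (-2) = qq * x" and d4: "x / exp (-4) = qq^2 * x" for x :: real
    by (simp_all add: exp_minus divide_inverse exp2 exp4 mult.commute)
  have "(\<Sum>j\<in>UNIV. (Kmat *v regf y)$j ^ 2 / intensity beta0 (pts j)) =
     (1 - a/2 - b/2 - c/2 + a*b/4 + a*c/4 + b*c/4)^2
     + qq * ((a/2 - a*b/4 - a*c/4)^2 + (b/2 - a*b/4 - b*c/4)^2 + (c/2 - a*c/4 - b*c/4)^2)
     + qq^2 * ((a*b/4)^2 + (a*c/4)^2 + (b*c/4)^2)"
    by (simp add: sum_7 lam_pts lag_comp d2 d4 a_def b_def c_def algebra_simps)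
  also have "\<dots> \<le> exp (a + b + c)" by (rule sens_poly[OF abc])
  finally have "(\<Sum>j\<in>UNIV. (Kmat *v regf y)$j ^ 2 / intensity beta0 (pts j)) \<le> exp (a + b + c)" .
  hence "intensity beta0 y * (\<Sum>j\<in>UNIV. (Kmat *v regf y)$j ^ 2 / intensity beta0 (pts j))
       \<le> intensity beta0 y * exp (a + b + c)"
    using lam_pos by (intro mult_left_mono) (auto intro: less_imp_le)
  also have "\<dots> = 1" by (simp add: intensity_beta0 a_def b_def c_def flip: exp_add)
  finally show ?thesis .
qed

lemma inj_pts: "inj pts"
proof -
  have "\<forall>i j. pts i = pts j \<longrightarrow> i = j"
    unfolding forall_7 by (simp add: pts_vals vec_eq_iff forall_3)
  thus ?thesis by (auto simp: inj_def)
qed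

lemma Sstar: "{vector [0,0,0], vector [2,0,0], vector [0,2,0], vector [0,0,2],
            vector [2,2,0], vector [2,0,2], vector [0,2,2]} = range pts"
  by (simp add: UNIV_7 pts_vals)

lemma det_Kmat: "det Kmat \<noteq> 0"
proof -
  define G :: "real^7^7" where "G = (\<chi> i j. regf (pts j) $ i)"
  have "Kmat ** G = mat 1"
  proof -
    have "(Kmat ** G)$i$j = (Kmat *v regf (pts j))$i" for i j
      by (simp add: matrix_matrix_mult_def matrix_vector_mult_def G_def)
    thus ?thesis by (simp add: vec_eq_iff lag_pts mat_def axis_def)
  qed
  hence "det Kmat * det G = 1" by (metis det_I det_mul)
  thus ?thesis by auto
qed


lemma amgm7:
  fixes u :: "7 \<Rightarrow> real"
  assumes nn: "\<And>i. 0 \<le> u i" and s: "(\<Sum>i\<in>UNIV. u i) \<le> 1"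
  shows "(\<Prod>i\<in>UNIV. u i) \<le> (1/7)^7"
proof -
  define P where "P = (\<Prod>i\<in>UNIV. u i)"
  have P0: "0 \<le> P" unfolding P_def using nn by (simp add: prod_nonneg)
  have c7: "card (UNIV :: 7 set) = 7" by simp
  have "(\<Sum>i\<in>UNIV. u i / card (UNIV::7 set)) \<ge> P powr (1 / card (UNIV::7 set))"
    unfolding P_def by (rule arith_geom_mean) (use nn in auto)
  hence "P powr (1/7) \<le> (\<Sum>i\<in>UNIV. u i) / 7" by (simp add: c7 sum_divide_distrib)
  also have "\<dots> \<le> 1/7" using s by simp
  finally have pw: "P powr (1/7) \<le> 1/7" .
  show ?thesis
  proof (cases "P = 0")
    case True
    hence "(\<Prod>i\<in>UNIV. u i) = 0" by (simp only: P_def)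
    moreover have "(0::real) \<le> (1/7)^7" by simp
    ultimately show ?thesis by linarith
  next
    case False
    hence Pp: "0 < P" using P0 by simp
    have "(P powr (1/7))^7 = (P powr (1/7)) powr (real 7)"
      by (rule powr_realpow[symmetric]) (use Pp in simp)
    also have "\<dots> = P" using Pp by (simp add: powr_powr)
    finally have "P = (P powr (1/7))^7" by simp
    also have "\<dots> \<le> (1/7)^7" by (rule power_mono[OF pw]) simp
    finally show ?thesis unfolding P_def .
  qed
qed

lemma info_outer: "info_matrix \<beta> S w = (\<Sum>x\<in>S. (w x * intensity \<beta> x) *\<^sub>R outer (regf x))"
  by (simp add: info_matrix_def outer_def)

lemma diag_axis_sum: "(\<Sum>i\<in>UNIV. c i *\<^sub>R outer (axis i (1::real)))$j$k = (if j = k then c j else 0)"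
  for c :: "'n::finite \<Rightarrow> real"
proof -
  have "c x * (axis x 1 $ j * axis x 1 $ k) = (if x = j then (if j = k then c j else 0) else 0)" for x
    by (auto simp: axis_def)
  hence "(\<Sum>i\<in>UNIV. c i *\<^sub>R outer (axis i (1::real)))$j$k = (\<Sum>x\<in>UNIV. (if x = j then (if j = k then c j else 0) else 0))"
    by (simp add: outer_def)
  also have "\<dots> = (if j = k then c j else 0)" by simp
  finally show ?thesis .
qed


theorem corollary1:
  shows "locally_D_optimal (vector [0, -1, -1, -1, 0, 0, 0])
           {x::real^3. \<forall>i. 0 \<le> x $ i}
           {vector [0,0,0], vector [2,0,0], vector [0,2,0], vector [0,0,2],
            vector [2,2,0], vector [2,0,2], vector [0,2,2]}
           (\<lambda>_. 1/7)"
proof -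
  let ?X = "{x::real^3. \<forall>i. 0 \<le> x $ i}"
  let ?w = "\<lambda>_::real^3. 1/7 :: real"
  have b: "vector [0, -1, -1, -1, 0, 0, 0] = beta0" by (simp add: beta0_def)
  have des: "is_design ?X (range pts) ?w"
  proof -
    have "\<forall>i j. 0 \<le> pts i $ j" unfolding forall_7 forall_3 by (simp add: pts_vals)
    hence sub: "range pts \<subseteq> ?X" by auto
    have "card (range pts) = 7" by (simp add: card_image inj_pts)
    hence "sum ?w (range pts) = 1" by simp
    thus ?thesis using sub by (simp add: is_design_def)
  qed
  have opt: "det (info_matrix beta0 S' w') \<le> det (info_matrix beta0 (range pts) ?w)"
    if dS: "is_design ?X S' w'" for S' w'
  proof -
    have fin: "finite S'" and subX: "S' \<subseteq> ?X" and wnn: "\<And>y. y \<in> S' \<Longrightarrow> 0 \<le> w' y"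
      and wsum: "sum w' S' = 1"
      using dS by (auto simp: is_design_def)
    define a where "a y = w' y * intensity beta0 y" for y
    define v where "v y = Kmat *v regf y" for y
    define lam where "lam i = intensity beta0 (pts i)" for i
    define M where "M = info_matrix beta0 S' w'"
    define Ms where "Ms = info_matrix beta0 (range pts) ?w"
    define U where "U = Kmat ** M ** transpose Kmat"
    define Us where "Us = Kmat ** Ms ** transpose Kmat"
    have ann: "0 \<le> a y" if "y \<in> S'" for y
      using wnn[OF that] lam_pos[of y] by (simp add: a_def)
    have lampos: "0 < lam i" for i by (simp add: lam_def lam_pos)
    have Ueq: "U = (\<Sum>y\<in>S'. a y *\<^sub>R outer (v y))"
      unfolding U_def M_def info_outer a_def v_def by (rule sandwich_sum[OF fin])
    have "Us = (\<Sum>x\<in>range pts. (1/7 * intensity beta0 x) *\<^sub>R outer (Kmat *v regf x))"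
      unfolding Us_def Ms_def info_outer by (rule sandwich_sum) simp
    also have "\<dots> = (\<Sum>i\<in>UNIV. (1/7 * lam i) *\<^sub>R outer (axis i 1))"
      by (simp add: sum.reindex[OF inj_pts] lag_pts lam_def)
    finally have Useq: "Us = (\<Sum>i\<in>UNIV. (1/7 * lam i) *\<^sub>R outer (axis i 1))" .
    have dUs: "det Us = (\<Prod>i\<in>UNIV. 1/7 * lam i)"
    proof -
      have "det Us = (\<Prod>i\<in>UNIV. Us$i$i)"
        by (rule det_diagonal) (simp only: Useq diag_axis_sum, simp)
      thus ?thesis by (simp only: Useq diag_axis_sum, simp)
    qed
    have detU: "det U = det Kmat * det M * det Kmat" by (simp add: U_def det_mul)
    have detUs: "det Us = det Kmat * det Ms * det Kmat" by (simp add: Us_def det_mul)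
    have had: "det U \<le> (\<Prod>i\<in>UNIV. U$i$i)"
      unfolding Ueq by (rule hadamard_psd[OF sym_sum_outer psd_sum_outer]) (rule ann)
    have Uii: "U$i$i = (\<Sum>y\<in>S'. a y * (v y $ i)^2)" for i
      by (simp add: Ueq outer_def power2_eq_square)
    define u where "u i = U$i$i / lam i" for i
    have unn: "0 \<le> u i" for i
      unfolding u_def Uii using ann lampos[of i] by (auto intro!: divide_nonneg_pos sum_nonneg)
    have "(\<Sum>i\<in>UNIV. u i) = (\<Sum>i\<in>UNIV. \<Sum>y\<in>S'. a y * (v y $ i)^2 / lam i)"
      by (simp add: u_def Uii sum_divide_distrib)
    also have "\<dots> = (\<Sum>y\<in>S'. \<Sum>i\<in>UNIV. a y * (v y $ i)^2 / lam i)" by (rule sum.swap)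
    also have "\<dots> = (\<Sum>y\<in>S'. w' y * (intensity beta0 y * (\<Sum>i\<in>UNIV. (v y $ i)^2 / lam i)))"
      by (simp add: a_def sum_distrib_left mult_ac)
    also have "\<dots> \<le> (\<Sum>y\<in>S'. w' y * 1)"
    proof (rule sum_mono)
      fix y assume yS: "y \<in> S'"
      have "intensity beta0 y * (\<Sum>i\<in>UNIV. (v y $ i)^2 / lam i) \<le> 1"
        unfolding v_def lam_def by (rule sensitivity) (use subX yS in auto)
      thus "w' y * (intensity beta0 y * (\<Sum>i\<in>UNIV. (v y $ i)^2 / lam i)) \<le> w' y * 1"
        using wnn[OF yS] by (rule mult_left_mono)
    qed
    also have "\<dots> = 1" using wsum by simp
    finally have usum: "(\<Sum>i\<in>UNIV. u i) \<le> 1" .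
    have "(\<Prod>i\<in>UNIV. U$i$i) = (\<Prod>i\<in>UNIV. lam i * u i)"
    proof (rule prod.cong)
      fix i show "U$i$i = lam i * u i" using lampos[of i] by (simp add: u_def)
    qed simp
    also have "\<dots> = (\<Prod>i\<in>UNIV. lam i) * (\<Prod>i\<in>UNIV. u i)" by (rule prod.distrib)
    also have "\<dots> \<le> (\<Prod>i\<in>UNIV. lam i) * (1/7)^7"
      using amgm7[OF unn usum] lampos by (intro mult_left_mono) (auto intro: prod_nonneg less_imp_le)
    also have "\<dots> = (\<Prod>i\<in>UNIV. 1/7 * lam i)"
    proof -
      have "(\<Prod>i\<in>UNIV. 1/7 * lam i) = (\<Prod>i\<in>(UNIV::7 set). (1/7::real)) * (\<Prod>i\<in>UNIV. lam i)"
        using prod.distrib[of "\<lambda>_. (1/7::real)" lam UNIV] by (simp del: prod_constant)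
      also have "(\<Prod>i\<in>(UNIV::7 set). (1/7::real)) = (1/7)^7" by simp
      finally show ?thesis by simp
    qed
    finally have "det U \<le> det Us" using had dUs by simp
    hence "det Kmat ^ 2 * det M \<le> det Kmat ^ 2 * det Ms"
      unfolding detU detUs by (simp add: power2_eq_square mult_ac)
    moreover have "0 < det Kmat ^ 2" using det_Kmat by simp
    ultimately have "det M \<le> det Ms" by simp
    thus ?thesis by (simp add: M_def Ms_def)
  qed
  show ?thesis unfolding b Sstar locally_D_optimal_def using des opt by blast
qed


end
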